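(* For each $s\in S_n$ and $w\in S_n$, the action of $s$ on the Schubert class $[\Omega_w]\in H^*_T(G/B)$ has the form $$s\cdot[\Omega_w]=[\Omega_w]+\sum_{v<w}c_v[\Omega_v]$$ for some polynomials $c_v\in\mathbb{C}[t_1,\ldots,t_n]$, where each nonzero $c_v$ has degree $\ell(w)-\ell(v)$.
   Context: Let $G=GL_n(\mathbb{C})$, $B$ (resp. $B^-$) the invertible upper- (resp. lower-) triangular matrices, and $T$ the diagonal torus. Permutations are identified with permutation matrices via $we_i=e_{w(i)}$, and $s_{jk}$ is the transposition of $j,k$. The Bruhat order is $v\le w$ iff $BvB/B\subseteq\overline{BwB/B}$. $\mathrm{Inv}(w)=\{t_i-t_j:i<j,\ w^{-1}(i)>w^{-1}(j)\}$ and $\ell(w)=|\mathrm{Inv}(w)|$. In GKM form, $H^*_T(G/B)$ is the ring of tuples $(p_u)_{u\in S_n}$, $p_u\in\mathbb{C}[t_1,\ldots,t_n]$, with $p_u-p_{s_{jk}u}\in\langle t_j-t_k\rangle$ for all $u$ and $j<k$. $S_n$ acts on polynomials by $(u\cdot f)(t_1,\ldots,t_n)=f(t_{u(1)},\ldots,t_{u(n)})$ and on $H^*_T(G/B)$ by $(u\cdot p)_v=u\cdot p_{u^{-1}v}$. The Schubert class $[\Omega_v]=(p^v_u)_u$ is the equivariant class of $\overline{B^-vB/B}$; equivalently, it is the unique class with $p^v_u=0$ unless $u\ge v$, each nonzero $p^v_u$ homogeneous of degree $\ell(v)$, and $p^v_v=\prod_{\beta\in\mathrm{Inv}(v)}\beta$.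 The Schubert classes form a $\mathbb{C}[t_1,\ldots,t_n]$-basis of $H^*_T(G/B)$. *)

theory Defs
  imports Complex_Main "HOL-Library.Poly_Mapping" "HOL-Combinatorics.Combinatorics"
begin

text \<open>Polynomials in the variables t_i (i :: nat) with complex coefficients:
  monomials are finitely supported exponent vectors, polynomials are finitely
  supported coefficient functions on monomials.\<close>
type_synonym mpoly = "(nat \<Rightarrow>\<^sub>0 nat) \<Rightarrow>\<^sub>0 complex"

definition var :: "nat \<Rightarrow> mpoly" where
  "var i = Poly_Mapping.single (Poly_Mapping.single i 1) 1"

definition const :: "complex \<Rightarrow> mpoly" where
  "const c = Poly_Mapping.single 0 c"

definition in_ring :: "nat \<Rightarrow> mpoly \<Rightarrow> bool" where
  "in_ring n f \<longleftrightarrow> (\<forall>m::nat \<Rightarrow>\<^sub>0 nat. m \<in> Poly_Mapping.keys f \<longrightarrow> Poly_Mapping.keys m \<subseteq> {1..n})"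

definition mon_degree :: "(nat \<Rightarrow>\<^sub>0 nat) \<Rightarrow> nat" where
  "mon_degree m = (\<Sum>i\<in>Poly_Mapping.keys m. Poly_Mapping.lookup m i)"

definition homogeneous :: "nat \<Rightarrow> mpoly \<Rightarrow> bool" where
  "homogeneous d f \<longleftrightarrow> (\<forall>m\<in>Poly_Mapping.keys f. mon_degree m = d)"

text \<open>Total degree (of a nonzero polynomial).\<close>
definition total_degree :: "mpoly \<Rightarrow> nat" where
  "total_degree f = Max (mon_degree ` Poly_Mapping.keys f)"

definition subst :: "(nat \<Rightarrow> mpoly) \<Rightarrow> mpoly \<Rightarrow> mpoly" where
  "subst g f = (\<Sum>m\<in>Poly_Mapping.keys f. const (Poly_Mapping.lookup f m) * (\<Prod>i\<in>Poly_Mapping.keys m. g i ^ Poly_Mapping.lookup m i))"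

definition poly_act :: "(nat \<Rightarrow> nat) \<Rightarrow> mpoly \<Rightarrow> mpoly" where
  "poly_act u f = subst (\<lambda>i. var (u i)) f"

definition Sn :: "nat \<Rightarrow> (nat \<Rightarrow> nat) set" where
  "Sn n = {u. u permutes {1..n}}"

definition Inv :: "nat \<Rightarrow> (nat \<Rightarrow> nat) \<Rightarrow> mpoly set" where
  "Inv n w = {var i - var j | i j. 1 \<le> i \<and> i < j \<and> j \<le> n \<and> inv w i > inv w j}"

definition ell :: "nat \<Rightarrow> (nat \<Rightarrow> nat) \<Rightarrow> nat" where
  "ell n w = card (Inv n w)"

definition bruhat_step :: "nat \<Rightarrow> (nat \<Rightarrow> nat) \<Rightarrow> (nat \<Rightarrow> nat) \<Rightarrow> bool" where
  "bruhat_step n v w \<longleftrightarrow> v \<in> Sn n \<and>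
     (\<exists>j k. 1 \<le> j \<and> j < k \<and> k \<le> n \<and> w = transpose j k \<circ> v \<and> ell n v < ell n w)"

definition bruhat_le :: "nat \<Rightarrow> (nat \<Rightarrow> nat) \<Rightarrow> (nat \<Rightarrow> nat) \<Rightarrow> bool" where
  "bruhat_le n v w \<longleftrightarrow> v \<in> Sn n \<and> (bruhat_step n)\<^sup>*\<^sup>* v w"

definition bruhat_less :: "nat \<Rightarrow> (nat \<Rightarrow> nat) \<Rightarrow> (nat \<Rightarrow> nat) \<Rightarrow> bool" where
  "bruhat_less n v w \<longleftrightarrow> bruhat_le n v w \<and> v \<noteq> w"

text \<open>GKM description of H^*_T(G/B): tuples indexed by S_n (values outside S_n are
  irrelevant) with entries in C[t_1..t_n] and p_u - p_{s_{jk}u} in the ideal (t_j - t_k).\<close>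
definition gkm :: "nat \<Rightarrow> ((nat \<Rightarrow> nat) \<Rightarrow> mpoly) \<Rightarrow> bool" where
  "gkm n p \<longleftrightarrow> (\<forall>u\<in>Sn n. in_ring n (p u)) \<and>
     (\<forall>u\<in>Sn n. \<forall>j k. 1 \<le> j \<and> j < k \<and> k \<le> n \<longrightarrow>
        (\<exists>q. in_ring n q \<and> p u - p (transpose j k \<circ> u) = q * (var j - var k)))"

definition weyl_act :: "(nat \<Rightarrow> nat) \<Rightarrow> ((nat \<Rightarrow> nat) \<Rightarrow> mpoly) \<Rightarrow> (nat \<Rightarrow> nat) \<Rightarrow> mpoly" where
  "weyl_act u p v = poly_act u (p (inv u \<circ> v))"

definition is_schubert_class :: "nat \<Rightarrow> (nat \<Rightarrow> nat) \<Rightarrow> ((nat \<Rightarrow> nat) \<Rightarrow> mpoly) \<Rightarrow> bool" where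
  "is_schubert_class n v p \<longleftrightarrow> gkm n p \<and>
     (\<forall>u\<in>Sn n. \<not> bruhat_le n v u \<longrightarrow> p u = 0) \<and>
     (\<forall>u\<in>Sn n. p u \<noteq> 0 \<longrightarrow> homogeneous (ell n v) (p u)) \<and>
     p v = (\<Prod>\<beta>\<in>Inv n v. \<beta>)"

end

theory Submission
  imports Defs
begin

section \<open>Polynomial substitution basics\<close>

definition mon :: "(nat \<Rightarrow> mpoly) \<Rightarrow> (nat \<Rightarrow>\<^sub>0 nat) \<Rightarrow> mpoly" where
  "mon g m = (\<Prod>i\<in>Poly_Mapping.keys m. g i ^ Poly_Mapping.lookup m i)"

lemma subst_alt: "subst g f = (\<Sum>m\<in>Poly_Mapping.keys f. const (Poly_Mapping.lookup f m) * mon g m)"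
  unfolding subst_def mon_def by simp

lemma const_0[simp]: "const 0 = 0" by (simp add: const_def)
lemma const_1[simp]: "const 1 = 1" by (simp add: const_def)
lemma const_add: "const (a + b) = const a + const b" by (simp add: const_def single_add)
lemma const_mult: "const (a * b) = const a * const b" by (simp add: const_def mult_single)
lemma const_uminus: "const (- a) = - const a" by (simp add: const_def single_uminus)
lemma const_diff: "const (a - b) = const a - const b" by (simp add: const_def single_diff)

lemma subst_superset:
  assumes "finite A" "Poly_Mapping.keys f \<subseteq> A"
  shows "subst g f = (\<Sum>m\<in>A. const (Poly_Mapping.lookup f m) * mon g m)"
  unfolding subst_alt
  by (rule sum.mono_neutral_left) (use assms in \<open>auto simp: in_keys_iff\<close>)

lemma mon_superset:
  assumes "finite A" "Poly_Mapping.keys m \<subseteq> A"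
  shows "mon g m = (\<Prod>i\<in>A. g i ^ Poly_Mapping.lookup m i)"
  unfolding mon_def
  by (rule prod.mono_neutral_left) (use assms in \<open>auto simp: in_keys_iff\<close>)

lemma subst_zero[simp]: "subst g 0 = 0" by (simp add: subst_def)

lemma subst_add: "subst g (f1 + f2) = subst g f1 + subst g f2"
proof -
  let ?A = "Poly_Mapping.keys f1 \<union> Poly_Mapping.keys f2"
  have k: "Poly_Mapping.keys (f1 + f2) \<subseteq> ?A" by (rule keys_add)
  have "subst g (f1 + f2) = (\<Sum>m\<in>?A. const (Poly_Mapping.lookup (f1+f2) m) * mon g m)"
    by (rule subst_superset) (use k in auto)
  also have "\<dots> = (\<Sum>m\<in>?A. const (Poly_Mapping.lookup f1 m) * mon g m) + (\<Sum>m\<in>?A. const (Poly_Mapping.lookup f2 m) * mon g m)"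
    by (simp add: lookup_add const_add distrib_right sum.distrib)
  also have "\<dots> = subst g f1 + subst g f2"
    by (simp add: subst_superset[symmetric])
  finally show ?thesis .
qed

lemma subst_uminus: "subst g (- f) = - subst g f"
  by (simp add: subst_alt lookup_uminus const_uminus sum_negf)

lemma subst_diff: "subst g (f1 - f2) = subst g f1 - subst g f2"
  using subst_add[of g f1 "- f2"] by (simp add: subst_uminus)

lemma subst_sum: "subst g (sum F A) = (\<Sum>x\<in>A. subst g (F x))"
  by (induction A rule: infinite_finite_induct) (auto simp: subst_add)

lemma subst_single: "subst g (Poly_Mapping.single m c) = const c * mon g m"
  by (cases "c = 0") (auto simp: subst_alt)

lemma poly_expand: "f = (\<Sum>m\<in>Poly_Mapping.keys f. Poly_Mapping.single m (Poly_Mapping.lookup f m))"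
proof (rule poly_mapping_eqI)
  fix k
  show "Poly_Mapping.lookup f k = Poly_Mapping.lookup (\<Sum>m\<in>Poly_Mapping.keys f. Poly_Mapping.single m (Poly_Mapping.lookup f m)) k"
    by (cases "k \<in> Poly_Mapping.keys f")
       (auto simp: lookup_sum lookup_single when_def in_keys_iff)
qed

lemma mon_add: "mon g (m1 + m2) = mon g m1 * mon g m2"
proof -
  let ?A = "Poly_Mapping.keys m1 \<union> Poly_Mapping.keys m2"
  have "mon g (m1 + m2) = (\<Prod>i\<in>?A. g i ^ Poly_Mapping.lookup (m1 + m2) i)"
    by (rule mon_superset) (use keys_add[of m1 m2] in auto)
  also have "\<dots> = (\<Prod>i\<in>?A. g i ^ Poly_Mapping.lookup m1 i) * (\<Prod>i\<in>?A. g i ^ Poly_Mapping.lookup m2 i)"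
    by (simp add: lookup_add power_add prod.distrib)
  also have "\<dots> = mon g m1 * mon g m2"
    by (simp add: mon_superset[symmetric])
  finally show ?thesis .
qed

lemma subst_mult: "subst g (f1 * f2) = subst g f1 * subst g f2"
proof -
  have "f1 * f2 = (\<Sum>a\<in>Poly_Mapping.keys f1. \<Sum>b\<in>Poly_Mapping.keys f2.
      Poly_Mapping.single a (Poly_Mapping.lookup f1 a) * Poly_Mapping.single b (Poly_Mapping.lookup f2 b))"
    by (subst poly_expand[of f1], subst poly_expand[of f2]) (simp add: sum_product)
  also have "\<dots> = (\<Sum>a\<in>Poly_Mapping.keys f1. \<Sum>b\<in>Poly_Mapping.keys f2.
      Poly_Mapping.single (a + b) (Poly_Mapping.lookup f1 a * Poly_Mapping.lookup f2 b))"
    by (simp add: mult_single)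
  finally have "subst g (f1 * f2) = (\<Sum>a\<in>Poly_Mapping.keys f1. \<Sum>b\<in>Poly_Mapping.keys f2.
      (const (Poly_Mapping.lookup f1 a) * mon g a) * (const (Poly_Mapping.lookup f2 b) * mon g b))"
    by (simp add: subst_sum subst_single const_mult mon_add ac_simps)
  also have "\<dots> = subst g f1 * subst g f2"
    by (simp add: subst_alt sum_product)
  finally show ?thesis .
qed

lemma subst_const[simp]: "subst g (const c) = const c"
  by (simp add: const_def subst_single mon_def)

lemma subst_one[simp]: "subst g 1 = 1"
  using subst_const[of g 1] by simp

lemma subst_var[simp]: "subst g (var i) = g i"
  by (simp add: var_def subst_single mon_def)

lemma subst_power: "subst g (f ^ k) = subst g f ^ k"
  by (induction k) (auto simp: subst_mult)

lemma subst_prod: "subst g (prod F A) = (\<Prod>x\<in>A. subst g (F x))"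
  by (induction A rule: infinite_finite_induct) (auto simp: subst_mult)

lemma subst_mon: "subst g (mon h m) = mon (\<lambda>i. subst g (h i)) m"
  by (simp add: mon_def subst_prod subst_power)

lemma subst_subst: "subst g (subst h f) = subst (\<lambda>i. subst g (h i)) f"
proof -
  have "subst g (subst h f) = (\<Sum>m\<in>Poly_Mapping.keys f. subst g (const (Poly_Mapping.lookup f m) * mon h m))"
    by (simp only: subst_alt[of h f] subst_sum)
  also have "\<dots> = (\<Sum>m\<in>Poly_Mapping.keys f. const (Poly_Mapping.lookup f m) * mon (\<lambda>i. subst g (h i)) m)"
    by (simp add: subst_mult subst_mon)
  finally show ?thesis by (simp only: subst_alt[of "\<lambda>i. subst g (h i)" f])
qed

lemma prod_single_aux: "(\<Prod>i\<in>A. Poly_Mapping.single (Poly_Mapping.single i (k i)) (1::complex))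
   = Poly_Mapping.single (\<Sum>i\<in>A. Poly_Mapping.single i (k i)) 1"
  by (induction A rule: infinite_finite_induct) (auto simp: mult_single)

lemma var_power: "var i ^ k = Poly_Mapping.single (Poly_Mapping.single i k) 1"
  by (induction k) (auto simp: var_def mult_single single_add[symmetric])

lemma mon_var: "mon var m = Poly_Mapping.single m 1"
proof -
  have "mon var m = (\<Prod>i\<in>Poly_Mapping.keys m. Poly_Mapping.single (Poly_Mapping.single i (Poly_Mapping.lookup m i)) 1)"
    by (simp add: mon_def var_power)
  also have "\<dots> = Poly_Mapping.single (\<Sum>i\<in>Poly_Mapping.keys m. Poly_Mapping.single i (Poly_Mapping.lookup m i)) 1"
    by (rule prod_single_aux)
  also have "\<dots> = Poly_Mapping.single m 1"
    by (simp add: poly_expand[symmetric])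
  finally show ?thesis .
qed

lemma subst_var_id: "subst var f = f"
proof -
  have "subst var f = (\<Sum>m\<in>Poly_Mapping.keys f. Poly_Mapping.single m (Poly_Mapping.lookup f m))"
    by (simp add: subst_alt mon_var const_def mult_single)
  then show ?thesis by (simp add: poly_expand[symmetric])
qed


lemma in_ring_0[simp]: "in_ring n 0" by (simp add: in_ring_def)
lemma in_ring_const[simp]: "in_ring n (const c)" by (simp add: in_ring_def const_def)
lemma in_ring_1[simp]: "in_ring n 1" using in_ring_const[of n 1] by simp
lemma in_ring_var: "i \<in> {1..n} \<Longrightarrow> in_ring n (var i)" by (simp add: in_ring_def var_def)
lemma in_ring_add: "in_ring n f \<Longrightarrow> in_ring n g \<Longrightarrow> in_ring n (f + g)"
  unfolding in_ring_def using keys_add[of f g] by blast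
lemma in_ring_uminus: "in_ring n f \<Longrightarrow> in_ring n (- f)"
  unfolding in_ring_def by (simp add: keys_minus)
lemma in_ring_diff: "in_ring n f \<Longrightarrow> in_ring n g \<Longrightarrow> in_ring n (f - g)"
  using in_ring_add[of n f "- g"] in_ring_uminus[of n g] by simp
lemma keys_plus_nat: "Poly_Mapping.keys ((a::nat \<Rightarrow>\<^sub>0 nat) + b) = Poly_Mapping.keys a \<union> Poly_Mapping.keys b"
  by (auto simp: in_keys_iff lookup_add)
lemma in_ring_mult: "in_ring n f \<Longrightarrow> in_ring n g \<Longrightarrow> in_ring n (f * g)"
  unfolding in_ring_def
proof (intro allI impI)
  fix m assume f: "\<forall>m. m \<in> Poly_Mapping.keys f \<longrightarrow> Poly_Mapping.keys m \<subseteq> {1..n}"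
    and g: "\<forall>m. m \<in> Poly_Mapping.keys g \<longrightarrow> Poly_Mapping.keys m \<subseteq> {1..n}"
    and m: "m \<in> Poly_Mapping.keys (f * g)"
  then obtain a b where "m = a + b" "a \<in> Poly_Mapping.keys f" "b \<in> Poly_Mapping.keys g"
    using keys_mult[of f g] by blast
  then show "Poly_Mapping.keys m \<subseteq> {1..n}" using f g by (auto simp: keys_plus_nat)
qed
lemma in_ring_sum: "(\<And>x. x \<in> A \<Longrightarrow> in_ring n (F x)) \<Longrightarrow> in_ring n (sum F A)"
  by (induction A rule: infinite_finite_induct) (auto intro: in_ring_add)
lemma in_ring_prod: "(\<And>x. x \<in> A \<Longrightarrow> in_ring n (F x)) \<Longrightarrow> in_ring n (prod F A)"
  by (induction A rule: infinite_finite_induct) (auto intro: in_ring_mult)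
lemma in_ring_power: "in_ring n f \<Longrightarrow> in_ring n (f ^ k)"
  by (induction k) (auto intro: in_ring_mult)
lemma in_ring_subst:
  assumes "in_ring n f" "\<And>i. i \<in> {1..n} \<Longrightarrow> in_ring n (g i)"
  shows "in_ring n (subst g f)"
  unfolding subst_def
  apply (rule in_ring_sum, rule in_ring_mult, simp, rule in_ring_prod, rule in_ring_power)
  using assms unfolding in_ring_def by blast

section \<open>Homogeneity\<close>

lemma mon_degree_superset:
  assumes "finite A" "Poly_Mapping.keys m \<subseteq> A"
  shows "mon_degree m = (\<Sum>i\<in>A. Poly_Mapping.lookup m i)"
  unfolding mon_degree_def
  by (rule sum.mono_neutral_left) (use assms in \<open>auto simp: in_keys_iff\<close>)

lemma mon_degree_add: "mon_degree (m1 + m2) = mon_degree m1 + mon_degree m2"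
proof -
  let ?A = "Poly_Mapping.keys m1 \<union> Poly_Mapping.keys m2"
  have "mon_degree (m1 + m2) = (\<Sum>i\<in>?A. Poly_Mapping.lookup (m1 + m2) i)"
    by (rule mon_degree_superset) (auto simp: keys_plus_nat)
  also have "\<dots> = (\<Sum>i\<in>?A. Poly_Mapping.lookup m1 i) + (\<Sum>i\<in>?A. Poly_Mapping.lookup m2 i)"
    by (simp add: lookup_add sum.distrib)
  finally show ?thesis by (simp add: mon_degree_superset[symmetric])
qed

lemma mon_degree_0[simp]: "mon_degree 0 = 0" by (simp add: mon_degree_def)
lemma mon_degree_single[simp]: "mon_degree (Poly_Mapping.single i k) = k"
  by (cases "k = 0") (auto simp: mon_degree_def)

lemma hom_0[simp]: "homogeneous d 0" by (simp add: homogeneous_def)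
lemma hom_const[simp]: "homogeneous 0 (const c)" by (simp add: homogeneous_def const_def)
lemma hom_1[simp]: "homogeneous 0 1" using hom_const[of 1] by simp
lemma hom_var[simp]: "homogeneous 1 (var i)" by (simp add: homogeneous_def var_def)
lemma hom_var'[simp]: "homogeneous (Suc 0) (var i)" using hom_var by simp
lemma hom_add: "homogeneous d f \<Longrightarrow> homogeneous d g \<Longrightarrow> homogeneous d (f + g)"
  unfolding homogeneous_def using keys_add[of f g] by blast
lemma hom_uminus: "homogeneous d f \<Longrightarrow> homogeneous d (- f)"
  unfolding homogeneous_def by (simp add: keys_minus)
lemma hom_diff: "homogeneous d f \<Longrightarrow> homogeneous d g \<Longrightarrow> homogeneous d (f - g)"
  using hom_add[of d f "- g"] hom_uminus[of d g] by simp
lemma hom_mult: "homogeneous a f \<Longrightarrow> homogeneous b g \<Longrightarrow> homogeneous (a + b) (f * g)"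
  unfolding homogeneous_def using keys_mult[of f g] by (auto simp: mon_degree_add)
lemma hom_sum: "(\<And>x. x \<in> A \<Longrightarrow> homogeneous d (F x)) \<Longrightarrow> homogeneous d (sum F A)"
  by (induction A rule: infinite_finite_induct) (auto intro: hom_add)
lemma hom_prod: "(\<And>x. x \<in> A \<Longrightarrow> homogeneous (D x) (F x)) \<Longrightarrow> homogeneous (sum D A) (prod F A)"
  by (induction A rule: infinite_finite_induct) (auto intro: hom_mult)
lemma hom_power: "homogeneous d f \<Longrightarrow> homogeneous (k * d) (f ^ k)"
proof (induction k)
  case (Suc k)
  then show ?case using hom_mult[of d f "k * d" "f ^ k"] by simp
qed simp
lemma hom_const_mult: "homogeneous d f \<Longrightarrow> homogeneous d (const c * f)"
  using hom_mult[OF hom_const, of d f c] by simp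

lemma hom_mon: "(\<And>i. homogeneous 1 (g i)) \<Longrightarrow> homogeneous (mon_degree m) (mon g m)"
  unfolding mon_def mon_degree_def
proof (rule hom_prod)
  fix i assume "\<And>i. homogeneous 1 (g i)"
  then show "homogeneous (Poly_Mapping.lookup m i) (g i ^ Poly_Mapping.lookup m i)"
    using hom_power[of 1 "g i" "Poly_Mapping.lookup m i"] by simp
qed

lemma hom_subst: "(\<And>i. homogeneous 1 (g i)) \<Longrightarrow> homogeneous d f \<Longrightarrow> homogeneous d (subst g f)"
  unfolding subst_alt
proof (rule hom_sum)
  fix m assume g: "\<And>i. homogeneous 1 (g i)" and f: "homogeneous d f" and m: "m \<in> Poly_Mapping.keys f"
  then have "mon_degree m = d" by (simp add: homogeneous_def)
  moreover have "homogeneous (mon_degree m) (const (Poly_Mapping.lookup f m) * mon g m)"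
    by (rule hom_const_mult[OF hom_mon[OF g]])
  ultimately show "homogeneous d (const (Poly_Mapping.lookup f m) * mon g m)"
    by simp
qed

definition hc :: "nat \<Rightarrow> mpoly \<Rightarrow> mpoly" where
  "hc k f = (\<Sum>m\<in>{m\<in>Poly_Mapping.keys f. mon_degree m = k}. Poly_Mapping.single m (Poly_Mapping.lookup f m))"

lemma lookup_hc: "Poly_Mapping.lookup (hc k f) m = (if mon_degree m = k then Poly_Mapping.lookup f m else 0)"
  by (cases "m \<in> Poly_Mapping.keys f") (auto simp: hc_def lookup_sum lookup_single when_def in_keys_iff)

lemma hc_add: "hc k (f + g) = hc k f + hc k g"
  by (rule poly_mapping_eqI) (simp add: lookup_hc lookup_add)

lemma hc_zero[simp]: "hc k 0 = 0" by (simp add: hc_def)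

lemma hc_sum: "hc k (sum F A) = (\<Sum>x\<in>A. hc k (F x))"
  by (induction A rule: infinite_finite_induct) (auto simp: hc_add)

lemma hc_hom: "homogeneous d f \<Longrightarrow> hc k f = (if k = d then f else 0)"
  by (rule poly_mapping_eqI) (auto simp: lookup_hc homogeneous_def in_keys_iff)

lemma hom_hc: "homogeneous k (hc k f)"
  by (auto simp: homogeneous_def in_keys_iff lookup_hc split: if_splits)

lemma hc_expand: "f = (\<Sum>k\<in>mon_degree ` Poly_Mapping.keys f. hc k f)"
proof (rule poly_mapping_eqI)
  fix m
  show "Poly_Mapping.lookup f m = Poly_Mapping.lookup (\<Sum>k\<in>mon_degree ` Poly_Mapping.keys f. hc k f) m"
  proof (cases "m \<in> Poly_Mapping.keys f")
    case True
    then show ?thesis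
      by (simp add: lookup_sum lookup_hc sum.delta' )
  next
    case False
    then show ?thesis by (auto simp: lookup_sum lookup_hc in_keys_iff intro!: sum.neutral)
  qed
qed

lemma hc_mult_hom:
  assumes "homogeneous e P"
  shows "hc (e + k) (P * q) = P * hc k q"
proof -
  let ?J = "mon_degree ` Poly_Mapping.keys q"
  have "P * q = (\<Sum>j\<in>?J. P * hc j q)"
    by (subst hc_expand[of q]) (simp add: sum_distrib_left)
  then have "hc (e + k) (P * q) = (\<Sum>j\<in>?J. hc (e + k) (P * hc j q))"
    by (simp add: hc_sum)
  also have "\<dots> = (\<Sum>j\<in>?J. if j = k then P * hc j q else 0)"
    by (rule sum.cong) (auto simp: hc_hom[OF hom_mult[OF assms hom_hc]])
  also have "\<dots> = P * hc k q"
  proof (cases "k \<in> ?J")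
    case False
    then have "hc k q = 0"
      by (intro poly_mapping_eqI) (auto simp: lookup_hc in_keys_iff)
    then show ?thesis using False by (simp add: sum.delta)
  qed (simp add: sum.delta)
  finally show ?thesis .
qed

lemma hom_quotient:
  assumes P: "P \<noteq> 0" "homogeneous e P" and Pq: "homogeneous d (P * q)"
    and m: "m \<in> Poly_Mapping.keys q"
  shows "e + mon_degree m = d"
proof (rule ccontr)
  let ?k = "mon_degree m"
  assume ne: "e + ?k \<noteq> d"
  have "hc (e + ?k) (P * q) = 0" using hc_hom[OF Pq] ne by simp
  then have "P * hc ?k q = 0" by (simp add: hc_mult_hom[OF P(2)])
  then have "hc ?k q = 0" using P(1) by simp
  then have "Poly_Mapping.lookup (hc ?k q) m = 0" by simp
  then show False using m by (simp add: lookup_hc in_keys_iff)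
qed

lemma hom_quotient_hom:
  assumes "P \<noteq> 0" "homogeneous e P" "homogeneous d (P * q)"
  shows "homogeneous (d - e) q" "d < e \<Longrightarrow> q = 0"
  using hom_quotient[OF assms] unfolding homogeneous_def
  by (fastforce, metis add_diff_cancel_left' keys_eq_empty equals0I le_add1 not_le)

lemma total_degree_hom: "homogeneous d f \<Longrightarrow> f \<noteq> 0 \<Longrightarrow> total_degree f = d"
proof -
  assume h: "homogeneous d f" and f: "f \<noteq> 0"
  then have "mon_degree ` Poly_Mapping.keys f = {d}"
    unfolding homogeneous_def by (auto simp: keys_eq_empty[symmetric] simp del: keys_eq_empty)
  then show ?thesis by (simp add: total_degree_def)
qed


section \<open>Divisibility by linear forms\<close>

abbreviation sv :: "nat \<Rightarrow> nat \<Rightarrow> nat \<Rightarrow> mpoly" where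
  "sv a b \<equiv> var(a := var b)"

lemma single1_inj: "Poly_Mapping.single j (1::nat) = Poly_Mapping.single i 1 \<longleftrightarrow> j = i"
proof
  assume "Poly_Mapping.single j (1::nat) = Poly_Mapping.single i 1"
  then have "Poly_Mapping.lookup (Poly_Mapping.single j (1::nat)) i = 1" by simp
  then show "j = i" by (simp add: lookup_single when_def split: if_splits)
qed simp

lemma single1_inj': "Poly_Mapping.single j (Suc 0) = Poly_Mapping.single i (Suc 0) \<longleftrightarrow> j = i"
  using single1_inj by simp

lemma var_inj: "var i = var j \<longleftrightarrow> i = j"
proof
  assume eq: "var i = var j"
  have "Poly_Mapping.lookup (var i) (Poly_Mapping.single i 1) = 1" by (simp add: var_def)
  then have "Poly_Mapping.lookup (var j) (Poly_Mapping.single i 1) = 1" using eq by simp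
  then have "Poly_Mapping.single j (1::nat) = Poly_Mapping.single i 1"
    by (simp add: var_def lookup_single when_def split: if_splits)
  then have "Poly_Mapping.lookup (Poly_Mapping.single j (1::nat)) i = 1" by simp
  then show "i = j" by (simp add: lookup_single when_def split: if_splits)
qed simp

lemma single_as_mon: "Poly_Mapping.single m c = const c * mon var m"
  by (simp add: mon_var const_def mult_single)

lemma mon_diff_factor:
  assumes "Poly_Mapping.keys m \<subseteq> {1..n}" "b \<in> {1..n}"
  shows "\<exists>q. in_ring n q \<and> mon var m - mon (sv a b) m = q * (var a - var b)"
proof (cases "a \<in> Poly_Mapping.keys m")
  case False
  have "mon (sv a b) m = mon var m"
    unfolding mon_def by (rule prod.cong) (use False in auto)
  then show ?thesis by (intro exI[of _ 0]) simp
next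
  case True
  let ?K = "Poly_Mapping.keys m - {a}"
  let ?R = "\<Prod>i\<in>?K. var i ^ Poly_Mapping.lookup m i"
  let ?e = "Poly_Mapping.lookup m a"
  have fin: "finite (Poly_Mapping.keys m)" by simp
  have 1: "mon var m = var a ^ ?e * ?R"
    unfolding mon_def using prod.remove[OF fin True, of "\<lambda>i. var i ^ Poly_Mapping.lookup m i"] by simp
  have "mon (sv a b) m = var b ^ ?e * (\<Prod>i\<in>?K. (sv a b) i ^ Poly_Mapping.lookup m i)"
    unfolding mon_def using prod.remove[OF fin True, of "\<lambda>i. (sv a b) i ^ Poly_Mapping.lookup m i"] by simp
  also have "(\<Prod>i\<in>?K. (sv a b) i ^ Poly_Mapping.lookup m i) = ?R"
    by (rule prod.cong) auto
  finally have 2: "mon (sv a b) m = var b ^ ?e * ?R" .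
  have "mon var m - mon (sv a b) m = (var a ^ ?e - var b ^ ?e) * ?R"
    by (simp add: 1 2 algebra_simps)
  also have "\<dots> = ((\<Sum>i<?e. var b ^ (?e - Suc i) * var a ^ i) * ?R) * (var a - var b)"
    by (simp add: power_diff_sumr2 ac_simps)
  finally have eq: "mon var m - mon (sv a b) m = ((\<Sum>i<?e. var b ^ (?e - Suc i) * var a ^ i) * ?R) * (var a - var b)" .
  have "a \<in> {1..n}" using True assms by auto
  then have "in_ring n ((\<Sum>i<?e. var b ^ (?e - Suc i) * var a ^ i) * ?R)"
    using assms
    by (intro in_ring_mult in_ring_sum in_ring_prod in_ring_power in_ring_var) auto
  with eq show ?thesis by blast
qed

lemma diff_subst_factor:
  assumes "in_ring n f" "b \<in> {1..n}"
  shows "\<exists>q. in_ring n q \<and> f - subst (sv a b) f = q * (var a - var b)"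
proof -
  have ex: "\<forall>m\<in>Poly_Mapping.keys f. \<exists>q. in_ring n q \<and> mon var m - mon (sv a b) m = q * (var a - var b)"
    using assms mon_diff_factor unfolding in_ring_def by blast
  then obtain Q where Q: "\<And>m. m \<in> Poly_Mapping.keys f \<Longrightarrow> in_ring n (Q m) \<and> mon var m - mon (sv a b) m = Q m * (var a - var b)"
    by metis
  have "f - subst (sv a b) f = (\<Sum>m\<in>Poly_Mapping.keys f. const (Poly_Mapping.lookup f m) * (mon var m - mon (sv a b) m))"
    by (subst (1) poly_expand) (simp add: single_as_mon subst_alt right_diff_distrib sum_subtractf)
  also have "\<dots> = (\<Sum>m\<in>Poly_Mapping.keys f. const (Poly_Mapping.lookup f m) * Q m) * (var a - var b)"
    by (simp add: Q sum_distrib_right mult.assoc)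
  finally show ?thesis
    by (intro exI[of _ "\<Sum>m\<in>Poly_Mapping.keys f. const (Poly_Mapping.lookup f m) * Q m"])
       (auto intro!: in_ring_sum in_ring_mult simp: Q)
qed

lemma factor_thm:
  assumes "in_ring n f" "b \<in> {1..n}" "subst (sv a b) f = 0"
  shows "\<exists>q. in_ring n q \<and> f = q * (var a - var b)"
  using diff_subst_factor[OF assms(1,2), of a] assms(3) by simp

lemma subst_sv_factor: "subst (sv a b) (q * (var a - var b)) = 0"
  by (simp add: subst_mult subst_diff)

lemma sv_root_nonzero:
  assumes "c < d" "a < b" "(c, d) \<noteq> (a, b)"
  shows "subst (sv a b) (var c - var d) \<noteq> 0"
  using assms by (auto simp: subst_diff var_inj)

lemma sv_cancel:
  assumes "subst (sv a b) X \<noteq> 0" "subst (sv a b) (X * Y) = 0"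
  shows "subst (sv a b) Y = 0"
  using assms by (simp add: subst_mult)

lemma prod_roots_divides:
  assumes "finite B" "B \<subseteq> {(a, b). 1 \<le> a \<and> a < b \<and> b \<le> n}" "in_ring n D"
    "\<And>a b. (a, b) \<in> B \<Longrightarrow> subst (sv a b) D = 0"
  shows "\<exists>q. in_ring n q \<and> D = q * (\<Prod>(a, b)\<in>B. var a - var b)"
  using assms
proof (induction B arbitrary: D rule: finite_induct)
  case empty
  then show ?case by auto
next
  case (insert p B)
  obtain a b where p: "p = (a, b)" by (cases p)
  have ab: "1 \<le> a" "a < b" "b \<le> n" using insert.prems(1) p by auto
  obtain q1 where q1: "in_ring n q1" "D = q1 * (var a - var b)"
    using factor_thm[OF insert.prems(2), of b a] insert.prems(3)[of a b] ab p by auto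
  have vanish: "subst (sv c d) q1 = 0" if cd: "(c, d) \<in> B" for c d
  proof -
    have "(c, d) \<noteq> (a, b)" using cd insert.hyps(2) p by auto
    moreover have "c < d" using cd insert.prems(1) by auto
    ultimately have "subst (sv c d) (var a - var b) \<noteq> 0"
      using sv_root_nonzero[of a b c d] ab by auto
    moreover have "subst (sv c d) ((var a - var b) * q1) = 0"
    proof -
      have "subst (sv c d) D = 0" using insert.prems(3)[of c d] cd by blast
      then show ?thesis by (simp only: mult.commute[of "var a - var b" q1] q1(2)[symmetric])
    qed
    ultimately show ?thesis by (rule sv_cancel)
  qed
  have "\<exists>q. in_ring n q \<and> q1 = q * (\<Prod>(a, b)\<in>B. var a - var b)"
    by (rule insert.IH[OF _ q1(1) vanish]) (use insert.prems(1) in auto)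
  then obtain q where q: "in_ring n q" "q1 = q * (\<Prod>(a, b)\<in>B. var a - var b)"
    by blast
  have "D = q * (\<Prod>(a, b)\<in>insert p B. var a - var b)"
    using q1(2) q(2) insert.hyps p by (simp add: ac_simps)
  then show ?case using q(1) by blast
qed


section \<open>Inversions and length\<close>

definition IPp :: "nat \<Rightarrow> (nat \<Rightarrow> nat) \<Rightarrow> (nat \<times> nat) set" where
  "IPp n \<pi> = {(i, j). 1 \<le> i \<and> i < j \<and> j \<le> n \<and> \<pi> i > \<pi> j}"

lemma finite_IPp[simp]: "finite (IPp n \<pi>)"
  by (rule finite_subset[of _ "{1..n} \<times> {1..n}"]) (auto simp: IPp_def)

lemma IPp_sub: "IPp n \<pi> \<subseteq> {(a, b). 1 \<le> a \<and> a < b \<and> b \<le> n}"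
  by (auto simp: IPp_def)

lemma root_inj:
  assumes "i < j" "k < l" "var i - var j = var k - var l"
  shows "i = k \<and> j = l"
proof -
  have L: "Poly_Mapping.lookup (var x) (Poly_Mapping.single i (Suc 0)) = (if x = i then 1 else 0)" for x
    by (simp add: var_def lookup_single when_def single1_inj single1_inj')
  have "Poly_Mapping.lookup (var i - var j) (Poly_Mapping.single i 1)
      = Poly_Mapping.lookup (var k - var l) (Poly_Mapping.single i 1)" using assms(3) by simp
  then have "Poly_Mapping.lookup (var i - var j) (Poly_Mapping.single i (Suc 0))
      = Poly_Mapping.lookup (var k - var l) (Poly_Mapping.single i (Suc 0))" by simp
  then have "1 = (if k = i then 1 else 0) - (if l = i then (1::complex) else 0)"
    using assms(1,2) by (simp add: lookup_minus L del: One_nat_def)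
  then have "k = i" using assms(2) by (auto split: if_splits)
  then have "var j = var l" using assms(3) by simp
  then show ?thesis using \<open>k = i\<close> by (simp add: var_inj)
qed

lemma Inv_image: "Inv n w = (\<lambda>(i, j). var i - var j) ` IPp n (inv w)"
  unfolding Inv_def IPp_def by auto

lemma inj_root: "inj_on (\<lambda>(i, j). var i - var j) (IPp n \<pi>)"
  by (auto simp: inj_on_def IPp_def dest: root_inj)

lemma ell_IPp: "ell n w = card (IPp n (inv w))"
  unfolding ell_def Inv_image by (rule card_image[OF inj_root])

lemma prod_Inv: "(\<Prod>\<beta>\<in>Inv n w. \<beta>) = (\<Prod>(i, j)\<in>IPp n (inv w). var i - var j)"
  unfolding Inv_image by (subst prod.reindex[OF inj_root]) (simp add: case_prod_unfold)

definition psi :: "nat \<Rightarrow> nat \<Rightarrow> nat \<times> nat \<Rightarrow> nat \<times> nat" where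
  "psi a b p = (if transpose a b (fst p) < transpose a b (snd p)
     then (transpose a b (fst p), transpose a b (snd p)) else p)"

lemma psi_inj: "inj_on (psi a b) {(i, j). i < j}"
proof (rule inj_onI)
  fix p q assume p: "p \<in> {(i, j). i < j}" and q: "q \<in> {(i, j). i < j}" and eq: "psi a b p = psi a b q"
  obtain i j where pij: "p = (i, j)" by (cases p)
  obtain k l where qkl: "q = (k, l)" by (cases q)
  show "p = q"
    using p q eq unfolding pij qkl psi_def
    by (auto split: if_splits simp: transpose_eq_iff)
qed

lemma transpose_reversed:
  fixes i j a b :: nat
  assumes "i < j" "\<not> transpose a b i < transpose a b j" "a < b"
  shows "(i = a \<and> a < j \<and> j \<le> b) \<or> (a < i \<and> i < b \<and> j = b)"
proof -
  consider "i = a" | "i = b" | "i \<noteq> a" "i \<noteq> b" by blast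
  then show ?thesis
  proof cases
    case 1
    then show ?thesis using assms by (cases "j = b") (auto simp: transpose_def split: if_splits)
  next
    case 2
    then show ?thesis using assms by (auto simp: transpose_def split: if_splits)
  next
    case 3
    then show ?thesis using assms by (auto simp: transpose_def split: if_splits)
  qed
qed

lemma transpose_range: "a \<in> {1..n} \<Longrightarrow> b \<in> {1..n} \<Longrightarrow> i \<in> {1..n} \<Longrightarrow> transpose a b i \<in> {1..n}"
  by (auto simp: transpose_def)

lemma psi_maps_desc:
  assumes ab: "1 \<le> a" "a < b" "b \<le> n" and desc: "\<pi> a > \<pi> b"
    and p: "p \<in> IPp n (\<pi> \<circ> transpose a b)"
  shows "psi a b p \<in> IPp n \<pi> - {(a, b)}"
proof -
  obtain i j where pij: "p = (i, j)" by (cases p)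
  have ij: "1 \<le> i" "i < j" "j \<le> n" "\<pi> (transpose a b i) > \<pi> (transpose a b j)"
    using p pij by (auto simp: IPp_def)
  have "psi a b (i, j) \<in> IPp n \<pi>"
  proof (cases "transpose a b i < transpose a b j")
    case True
    have "transpose a b i \<in> {1..n}" "transpose a b j \<in> {1..n}"
      by (rule transpose_range; use ij ab in simp)+
    then show ?thesis using True ij by (auto simp: psi_def IPp_def)
  next
    case False
    then have ps: "psi a b (i, j) = (i, j)" by (simp add: psi_def)
    from transpose_reversed[OF ij(2) False ab(2)]
    have "\<pi> i > \<pi> j"
    proof
      assume c: "i = a \<and> a < j \<and> j \<le> b"
      show ?thesis
      proof (cases "j = b")
        case True
        then show ?thesis using c ij(4) desc by simp
      next
        case False
        then have "transpose a b j = j" "transpose a b i = b" using c by auto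
        then show ?thesis using c ij(4) desc by simp
      qed
    next
      assume c: "a < i \<and> i < b \<and> j = b"
      then have "transpose a b j = a" "transpose a b i = i" by auto
      then show ?thesis using c ij(4) desc by simp
    qed
    then show ?thesis using ps ij by (simp add: IPp_def)
  qed
  moreover have "psi a b (i, j) \<noteq> (a, b)"
  proof
    assume "psi a b (i, j) = (a, b)"
    moreover have "psi a b (a, b) = (a, b)" using ab by (simp add: psi_def)
    ultimately have "psi a b (i, j) = psi a b (a, b)" by simp
    then have "(i, j) = (a, b)" by (rule inj_onD[OF psi_inj[of a b]]) (use ij ab in auto)
    then show False using ij desc by simp
  qed
  ultimately show ?thesis using pij by simp
qed

lemma psi_maps_adj:
  assumes ab: "1 \<le> a" "b = Suc a" "b \<le> n"
    and p: "p \<in> IPp n (\<pi> \<circ> transpose a b) - {(a, b)}"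
  shows "psi a b p \<in> IPp n \<pi>"
proof -
  obtain i j where pij: "p = (i, j)" by (cases p)
  have ij: "1 \<le> i" "i < j" "j \<le> n" "\<pi> (transpose a b i) > \<pi> (transpose a b j)" "(i, j) \<noteq> (a, b)"
    using p pij by (auto simp: IPp_def)
  have T: "transpose a b i < transpose a b j"
  proof (rule ccontr)
    assume "\<not> ?thesis"
    from transpose_reversed[OF ij(2) this] ab ij(5) show False by auto
  qed
  have "transpose a b i \<in> {1..n}" "transpose a b j \<in> {1..n}"
    by (rule transpose_range; use ij ab in simp)+
  then show ?thesis using T ij pij by (auto simp: psi_def IPp_def)
qed

lemma card_IPp_desc:
  assumes "1 \<le> a" "a < b" "b \<le> n" "\<pi> a > \<pi> b"
  shows "card (IPp n (\<pi> \<circ> transpose a b)) < card (IPp n \<pi>)"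
proof -
  have inj: "inj_on (psi a b) (IPp n (\<pi> \<circ> transpose a b))"
    by (rule inj_on_subset[OF psi_inj]) (auto simp: IPp_def)
  have "card (IPp n (\<pi> \<circ> transpose a b)) = card (psi a b ` IPp n (\<pi> \<circ> transpose a b))"
    using card_image[OF inj] by simp
  also have "\<dots> \<le> card (IPp n \<pi> - {(a, b)})"
    by (rule card_mono[OF _ image_subsetI]) (simp, use psi_maps_desc[OF assms] in blast)
  also have "\<dots> < card (IPp n \<pi>)"
    by (rule card_Diff1_less[OF finite_IPp]) (use assms in \<open>simp add: IPp_def\<close>)
  finally show ?thesis .
qed

lemma card_IPp_adj:
  assumes "1 \<le> a" "b = Suc a" "b \<le> n"
  shows "card (IPp n (\<pi> \<circ> transpose a b)) \<le> card (IPp n \<pi>) + 1"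
proof -
  let ?A = "IPp n (\<pi> \<circ> transpose a b) - {(a, b)}"
  have inj: "inj_on (psi a b) ?A"
    by (rule inj_on_subset[OF psi_inj]) (auto simp: IPp_def)
  have "card (IPp n (\<pi> \<circ> transpose a b)) \<le> card ?A + 1"
  proof (cases "(a, b) \<in> IPp n (\<pi> \<circ> transpose a b)")
    case True
    have "Suc (card ?A) = card (IPp n (\<pi> \<circ> transpose a b))"
      by (rule card_Suc_Diff1) (use True in simp_all)
    then show ?thesis by simp
  qed simp
  also have "card ?A = card (psi a b ` ?A)"
    using card_image[OF inj] by simp
  also have "\<dots> \<le> card (IPp n \<pi>)"
    by (rule card_mono[OF _ image_subsetI]) (simp, use psi_maps_adj[OF assms] in blast)
  finally show ?thesis by (simp add: comp_def)
qed

lemma Sn_inv_comp_transpose: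
  assumes "w \<in> Sn n"
  shows "inv (transpose a b \<circ> w) = inv w \<circ> transpose a b"
  using assms by (simp add: Sn_def o_inv_distrib permutes_bij)

lemma Sn_transpose_comp:
  assumes "w \<in> Sn n" "a \<in> {1..n}" "b \<in> {1..n}"
  shows "transpose a b \<circ> w \<in> Sn n"
  using assms by (simp add: Sn_def permutes_compose permutes_swap_id)

lemma ell_desc:
  assumes w: "w \<in> Sn n" and ab: "(a, b) \<in> IPp n (inv w)"
  shows "ell n (transpose a b \<circ> w) < ell n w"
  using card_IPp_desc[of a b n "inv w"] ab
  by (simp add: ell_IPp Sn_inv_comp_transpose[OF w] IPp_def)

lemma ell_adj:
  assumes w: "w \<in> Sn n" and a: "1 \<le> a" "Suc a \<le> n"
  shows "ell n (transpose a (Suc a) \<circ> w) \<le> ell n w + 1"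
  using card_IPp_adj[of a "Suc a" n "inv w"] a
  by (simp add: ell_IPp Sn_inv_comp_transpose[OF w])


section \<open>Bruhat order basics\<close>

lemma bruhat_step_props:
  assumes "bruhat_step n v w"
  shows "v \<in> Sn n" "w \<in> Sn n" "ell n v < ell n w"
  using assms unfolding bruhat_step_def by (auto intro: Sn_transpose_comp)

lemma bruhat_rtc:
  assumes "(bruhat_step n)\<^sup>*\<^sup>* v w" "v \<in> Sn n"
  shows "w \<in> Sn n \<and> ell n v \<le> ell n w \<and> (v \<noteq> w \<longrightarrow> ell n v < ell n w)"
  using assms
proof (induction rule: rtranclp_induct)
  case base
  then show ?case by simp
next
  case (step y z)
  then show ?case using bruhat_step_props[OF step.hyps(2)] by auto
qed

lemma bruhat_le_Sn: "bruhat_le n v w \<Longrightarrow> v \<in> Sn n \<and> w \<in> Sn n"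
  unfolding bruhat_le_def using bruhat_rtc[of n v w] by simp

lemma bruhat_le_ell: "bruhat_le n v w \<Longrightarrow> ell n v \<le> ell n w"
  unfolding bruhat_le_def using bruhat_rtc[of n v w] by simp

lemma bruhat_le_ell_less: "bruhat_le n v w \<Longrightarrow> v \<noteq> w \<Longrightarrow> ell n v < ell n w"
  unfolding bruhat_le_def using bruhat_rtc[of n v w] by simp

lemma bruhat_le_refl: "v \<in> Sn n \<Longrightarrow> bruhat_le n v v"
  by (simp add: bruhat_le_def)

lemma bruhat_le_trans: "bruhat_le n u v \<Longrightarrow> bruhat_le n v w \<Longrightarrow> bruhat_le n u w"
  unfolding bruhat_le_def by auto

lemma bruhat_le_eq_ell: "bruhat_le n u v \<Longrightarrow> ell n v \<le> ell n u \<Longrightarrow> u = v"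
  using bruhat_le_ell_less[of n u v] by linarith

lemma bruhat_le_antisym: "bruhat_le n u v \<Longrightarrow> bruhat_le n v u \<Longrightarrow> u = v"
  using bruhat_le_eq_ell bruhat_le_ell by blast

lemma bruhat_le_stepI:
  assumes "v \<in> Sn n" "1 \<le> j" "j < k" "k \<le> n" "w = transpose j k \<circ> v" "ell n v < ell n w"
  shows "bruhat_le n v w"
proof -
  have "bruhat_step n v w" using assms unfolding bruhat_step_def by blast
  then show ?thesis using assms(1) unfolding bruhat_le_def by simp
qed

lemma transpose_comp_cancel: "transpose a b \<circ> (transpose a b \<circ> u) = u"
  by (simp add: comp_assoc[symmetric])

lemma desc_below:
  assumes u: "u \<in> Sn n" and ab: "(a, b) \<in> IPp n (inv u)"
  shows "bruhat_le n (transpose a b \<circ> u) u" "transpose a b \<circ> u \<in> Sn n"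
    "ell n (transpose a b \<circ> u) < ell n u"
proof -
  have ab': "1 \<le> a" "a < b" "b \<le> n" using ab by (auto simp: IPp_def)
  show S: "transpose a b \<circ> u \<in> Sn n" using Sn_transpose_comp[OF u] ab' by simp
  show L: "ell n (transpose a b \<circ> u) < ell n u" by (rule ell_desc[OF u ab])
  show "bruhat_le n (transpose a b \<circ> u) u"
    by (rule bruhat_le_stepI[OF S ab'(1,2,3)]) (simp_all add: transpose_comp_cancel L)
qed

inductive SP :: "nat \<Rightarrow> (nat \<Rightarrow> nat) \<Rightarrow> bool" for n where
  SP_id: "SP n id"
| SP_step: "SP n p \<Longrightarrow> 1 \<le> i \<Longrightarrow> Suc i \<le> n \<Longrightarrow> SP n (transpose i (Suc i) \<circ> p)"

lemma no_adj_desc_id: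
  assumes p: "p \<in> Sn n" and nd: "\<And>i. 1 \<le> i \<Longrightarrow> Suc i \<le> n \<Longrightarrow> \<not> inv p i > inv p (Suc i)"
  shows "p = id"
proof -
  have ip: "inv p permutes {1..n}" using p by (simp add: Sn_def permutes_inv)
  have ge: "1 \<le> i \<longrightarrow> i \<le> n \<longrightarrow> inv p i \<ge> i" for i
  proof (induction i)
    case (Suc i)
    show ?case
    proof (intro impI)
      assume i: "1 \<le> Suc i" "Suc i \<le> n"
      show "inv p (Suc i) \<ge> Suc i"
      proof (cases "i = 0")
        case True
        have "inv p 1 \<in> {1..n}" using permutes_in_image[OF ip, of 1] i True by simp
        then show ?thesis using True by simp
      next
        case False
        then have IH: "inv p i \<ge> i" using Suc.IH i by simp
        have "inv p i \<noteq> inv p (Suc i)" using injD[OF permutes_inj[OF ip], of i "Suc i"] by auto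
        moreover have "\<not> inv p i > inv p (Suc i)" using nd[of i] False i by simp
        ultimately show ?thesis using IH by simp
      qed
    qed
  qed simp
  have "inv p = id" by (rule permutes_natset_ge[OF ip]) (use ge in auto)
  then show ?thesis
    using permutes_inv_inv[of p "{1..n}"] p by (simp add: Sn_def)
qed

lemma Sn_SP: "p \<in> Sn n \<Longrightarrow> SP n p"
proof (induction "ell n p" arbitrary: p rule: less_induct)
  case less
  show ?case
  proof (cases "\<exists>i. 1 \<le> i \<and> Suc i \<le> n \<and> inv p i > inv p (Suc i)")
    case True
    then obtain i where i: "1 \<le> i" "Suc i \<le> n" "inv p i > inv p (Suc i)" by blast
    then have ip: "(i, Suc i) \<in> IPp n (inv p)" by (simp add: IPp_def)
    have "SP n (transpose i (Suc i) \<circ> p)"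
      using less.hyps[OF desc_below(3)[OF less.prems ip] desc_below(2)[OF less.prems ip]] .
    then have "SP n (transpose i (Suc i) \<circ> (transpose i (Suc i) \<circ> p))"
      by (rule SP_step[OF _ i(1) i(2)])
    then show ?thesis by (simp only: transpose_comp_cancel)
  next
    case False
    have "p = id" by (rule no_adj_desc_id[OF less.prems]) (use False in auto)
    then show ?thesis by (simp add: SP_id)
  qed
qed


section \<open>Actions and GKM classes\<close>

lemma poly_act_add: "poly_act u (f + g) = poly_act u f + poly_act u g"
  by (simp add: poly_act_def subst_add)
lemma poly_act_diff: "poly_act u (f - g) = poly_act u f - poly_act u g"
  by (simp add: poly_act_def subst_diff)
lemma poly_act_uminus: "poly_act u (- f) = - poly_act u f"
  by (simp add: poly_act_def subst_uminus)
lemma poly_act_mult: "poly_act u (f * g) = poly_act u f * poly_act u g"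
  by (simp add: poly_act_def subst_mult)
lemma poly_act_sum: "poly_act u (sum F A) = (\<Sum>x\<in>A. poly_act u (F x))"
  by (simp add: poly_act_def subst_sum)
lemma poly_act_zero[simp]: "poly_act u 0 = 0"
  by (simp add: poly_act_def)
lemma poly_act_one[simp]: "poly_act u 1 = 1"
  by (simp add: poly_act_def)
lemma poly_act_const[simp]: "poly_act u (const c) = const c"
  by (simp add: poly_act_def)
lemma poly_act_var[simp]: "poly_act u (var i) = var (u i)"
  by (simp add: poly_act_def)
lemma poly_act_comp: "poly_act u (poly_act v f) = poly_act (u \<circ> v) f"
  by (simp add: poly_act_def subst_subst)
lemma poly_act_id: "poly_act id f = f"
  by (simp add: poly_act_def subst_var_id[unfolded id_def] id_def)

lemma Sn_inv: "u \<in> Sn n \<Longrightarrow> inv u \<in> Sn n"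
  by (simp add: Sn_def permutes_inv)

lemma Sn_comp: "u \<in> Sn n \<Longrightarrow> v \<in> Sn n \<Longrightarrow> u \<circ> v \<in> Sn n"
  by (simp add: Sn_def permutes_compose)

lemma Sn_in_range: "u \<in> Sn n \<Longrightarrow> i \<in> {1..n} \<Longrightarrow> u i \<in> {1..n}"
  by (metis Sn_def mem_Collect_eq permutes_in_image)

lemma Sn_inv_o: "u \<in> Sn n \<Longrightarrow> inv u \<circ> u = id" "u \<in> Sn n \<Longrightarrow> u \<circ> inv u = id"
  by (simp_all add: Sn_def permutes_inv_o)

lemma poly_act_in_ring: "u \<in> Sn n \<Longrightarrow> in_ring n f \<Longrightarrow> in_ring n (poly_act u f)"
  unfolding poly_act_def
proof (rule in_ring_subst)
  fix i :: nat assume u: "u \<in> Sn n" and i: "i \<in> {1..n}"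
  show "in_ring n (var (u i))" by (rule in_ring_var[OF Sn_in_range[OF u i]])
qed

lemma poly_act_hom: "homogeneous d f \<Longrightarrow> homogeneous d (poly_act u f)"
  unfolding poly_act_def by (rule hom_subst) simp_all

lemma poly_act_inv: "u \<in> Sn n \<Longrightarrow> poly_act (inv u) (poly_act u f) = f"
  by (simp add: poly_act_comp Sn_inv_o poly_act_id)

lemma poly_act_eq_0: "u \<in> Sn n \<Longrightarrow> poly_act u f = 0 \<longleftrightarrow> f = 0"
  using poly_act_inv[of u n f] by auto

lemma weyl_act_comp:
  assumes "u \<in> Sn n" "v \<in> Sn n"
  shows "weyl_act u (weyl_act v p) x = weyl_act (u \<circ> v) p x"
proof -
  have "inv (u \<circ> v) = inv v \<circ> inv u"
    using assms by (simp add: Sn_def o_inv_distrib permutes_bij)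
  then show ?thesis by (simp add: weyl_act_def poly_act_comp comp_assoc)
qed

lemma inj_transpose_conj: "inj f \<Longrightarrow> f (transpose j k x) = transpose (f j) (f k) (f x)"
  by (auto simp: transpose_def dest: injD)

lemma gkm_D:
  assumes "gkm n p" "u \<in> Sn n" "1 \<le> j" "j < k" "k \<le> n"
  shows "\<exists>q. in_ring n q \<and> p u - p (transpose j k \<circ> u) = q * (var j - var k)"
proof -
  have G: "\<forall>u\<in>Sn n. \<forall>j k. 1 \<le> j \<and> j < k \<and> k \<le> n \<longrightarrow>
        (\<exists>q. in_ring n q \<and> p u - p (transpose j k \<circ> u) = q * (var j - var k))"
    using assms(1) unfolding gkm_def by (rule conjunct2)
  show ?thesis using G[rule_format, OF assms(2)] assms(3-5) by blast
qed

lemma gkm_ring: "gkm n p \<Longrightarrow> u \<in> Sn n \<Longrightarrow> in_ring n (p u)"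
  unfolding gkm_def by blast

lemma gkm_sym:
  assumes "gkm n p" "u \<in> Sn n" "j \<in> {1..n}" "k \<in> {1..n}" "j \<noteq> k"
  shows "\<exists>q. in_ring n q \<and> p u - p (transpose j k \<circ> u) = q * (var j - var k)"
proof (cases "j < k")
  case True
  then show ?thesis using gkm_D[OF assms(1,2), of j k] assms(3,4) by simp
next
  case False
  then have "k < j" using assms by simp
  then obtain q where q: "in_ring n q" "p u - p (transpose k j \<circ> u) = q * (var k - var j)"
    using gkm_D[OF assms(1,2), of k j] assms(3,4) by auto
  then have "p u - p (transpose j k \<circ> u) = (- q) * (var j - var k)"
    by (simp add: transpose_commute algebra_simps)
  then show ?thesis using q(1) in_ring_uminus by blast
qed

lemma gkm_weyl:
  assumes s: "s \<in> Sn n" and g: "gkm n p"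
  shows "gkm n (weyl_act s p)"
  unfolding gkm_def
proof (intro conjI ballI allI impI)
  fix u assume u: "u \<in> Sn n"
  then have x: "inv s \<circ> u \<in> Sn n" using s by (simp add: Sn_comp Sn_inv)
  show "in_ring n (weyl_act s p u)"
    unfolding weyl_act_def by (rule poly_act_in_ring[OF s gkm_ring[OF g x]])
  fix j k assume jk: "1 \<le> j \<and> j < k \<and> k \<le> n"
  have isn: "inv s \<in> Sn n" using s by (rule Sn_inv)
  have inj: "inj (inv s)" using isn by (simp add: Sn_def permutes_inj)
  have j': "inv s j \<in> {1..n}" "inv s k \<in> {1..n}" "inv s j \<noteq> inv s k"
    using jk Sn_in_range[OF isn] injD[OF inj, of j k] by auto
  have comp: "inv s \<circ> (transpose j k \<circ> u) = transpose (inv s j) (inv s k) \<circ> (inv s \<circ> u)"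
    by (simp add: fun_eq_iff inj_transpose_conj[OF inj])
  obtain q where q: "in_ring n q"
    "p (inv s \<circ> u) - p (transpose (inv s j) (inv s k) \<circ> (inv s \<circ> u)) = q * (var (inv s j) - var (inv s k))"
    using gkm_sym[OF g x j'] by blast
  have sj: "s (inv s j) = j" "s (inv s k) = k"
    using s by (simp_all add: Sn_def permutes_inverses)
  have "weyl_act s p u - weyl_act s p (transpose j k \<circ> u) = poly_act s q * (var j - var k)"
    unfolding weyl_act_def comp
    by (simp add: poly_act_diff[symmetric] q(2) poly_act_mult poly_act_diff sj)
  then show "\<exists>q. in_ring n q \<and> weyl_act s p u - weyl_act s p (transpose j k \<circ> u) = q * (var j - var k)"
    using poly_act_in_ring[OF s q(1)] by blast
qed

lemma gkmI:
  assumes "\<And>u. u \<in> Sn n \<Longrightarrow> in_ring n (p u)"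
    "\<And>u j k. u \<in> Sn n \<Longrightarrow> 1 \<le> j \<Longrightarrow> j < k \<Longrightarrow> k \<le> n \<Longrightarrow>
       \<exists>q. in_ring n q \<and> p u - p (transpose j k \<circ> u) = q * (var j - var k)"
  shows "gkm n p"
  unfolding gkm_def using assms by blast

lemma gkm_diff:
  assumes A: "gkm n p" and B: "gkm n p'"
  shows "gkm n (\<lambda>u. p u - p' u)"
proof (rule gkmI)
  fix u assume "u \<in> Sn n"
  then show "in_ring n (p u - p' u)" using gkm_ring[OF A] gkm_ring[OF B] by (simp add: in_ring_diff)
next
  fix u j k assume u: "u \<in> Sn n" and jk: "1 \<le> j" "j < k" "k \<le> n"
  obtain q where q: "in_ring n q" "p u - p (transpose j k \<circ> u) = q * (var j - var k)"
    using gkm_D[OF A u jk] by blast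
  obtain q' where q': "in_ring n q'" "p' u - p' (transpose j k \<circ> u) = q' * (var j - var k)"
    using gkm_D[OF B u jk] by blast
  have "p u - p' u - (p (transpose j k \<circ> u) - p' (transpose j k \<circ> u))
     = (p u - p (transpose j k \<circ> u)) - (p' u - p' (transpose j k \<circ> u))" by (simp add: algebra_simps)
  also have "\<dots> = (q - q') * (var j - var k)" unfolding q(2) q'(2) by (simp add: left_diff_distrib)
  finally have "p u - p' u - (p (transpose j k \<circ> u) - p' (transpose j k \<circ> u)) = (q - q') * (var j - var k)" .
  then show "\<exists>q. in_ring n q \<and> p u - p' u - (p (transpose j k \<circ> u) - p' (transpose j k \<circ> u)) = q * (var j - var k)"
    using in_ring_diff[OF q(1) q'(1)] by blast
qed

lemma gkm_scale:
  assumes A: "gkm n p" and c: "in_ring n c"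
  shows "gkm n (\<lambda>u. c * p u)"
proof (rule gkmI)
  fix u assume "u \<in> Sn n"
  then show "in_ring n (c * p u)" using gkm_ring[OF A] c by (simp add: in_ring_mult)
next
  fix u j k assume u: "u \<in> Sn n" and jk: "1 \<le> j" "j < k" "k \<le> n"
  obtain q where q: "in_ring n q" "p u - p (transpose j k \<circ> u) = q * (var j - var k)"
    using gkm_D[OF A u jk] by blast
  have "c * p u - c * p (transpose j k \<circ> u) = c * (p u - p (transpose j k \<circ> u))"
    by (simp add: right_diff_distrib)
  also have "\<dots> = (c * q) * (var j - var k)" unfolding q(2) by (simp add: mult.assoc)
  finally have "c * p u - c * p (transpose j k \<circ> u) = (c * q) * (var j - var k)" .
  then show "\<exists>q. in_ring n q \<and> c * p u - c * p (transpose j k \<circ> u) = q * (var j - var k)"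
    using in_ring_mult[OF c q(1)] by blast
qed


section \<open>Expansion in Schubert classes\<close>

lemma finite_Sn[simp]: "finite (Sn n)"
  unfolding Sn_def by (rule finite_permutations) simp

definition Pr :: "nat \<Rightarrow> (nat \<Rightarrow> nat) \<Rightarrow> mpoly" where
  "Pr n u = (\<Prod>(i, j)\<in>IPp n (inv u). var i - var j)"

lemma Pr_nonzero: "Pr n u \<noteq> 0"
  unfolding Pr_def
proof (subst prod_zero_iff)
  show "finite (IPp n (inv u))" by simp
  show "\<not> (\<exists>a\<in>IPp n (inv u). (case a of (i, j) \<Rightarrow> var i - var j) = 0)"
    by (auto simp: IPp_def var_inj)
qed

lemma Pr_hom: "homogeneous (ell n u) (Pr n u)"
proof -
  have "homogeneous (\<Sum>p\<in>IPp n (inv u). 1) (\<Prod>(i, j)\<in>IPp n (inv u). var i - var j)"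
    by (rule hom_prod) (auto intro: hom_diff)
  then show ?thesis by (simp add: Pr_def ell_IPp)
qed

lemma Pr_ring: "in_ring n (Pr n u)"
  unfolding Pr_def by (rule in_ring_prod) (auto simp: IPp_def intro!: in_ring_diff in_ring_var)

lemma subst_poly_act: "subst g (poly_act r f) = subst (\<lambda>j. g (r j)) f"
  by (simp add: poly_act_def subst_subst)

lemma sv_transpose: "(\<lambda>j. sv a b (transpose a b j)) = sv a b"
  by (auto simp: fun_eq_iff transpose_def)

lemma subst_sv_poly_act: "subst (sv a b) (poly_act (transpose a b) f) = subst (sv a b) f"
  by (simp only: subst_poly_act sv_transpose)

lemma poly_act_root: "poly_act (transpose a b) (var a - var b) = - (var a - var b)"
  by (simp add: poly_act_diff)

lemma Sn_transpose: "a \<in> {1..n} \<Longrightarrow> b \<in> {1..n} \<Longrightarrow> transpose a b \<in> Sn n"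
  by (simp add: Sn_def permutes_swap_id)

context
  fixes n :: nat and \<sigma> :: "(nat \<Rightarrow> nat) \<Rightarrow> (nat \<Rightarrow> nat) \<Rightarrow> mpoly"
  assumes schubert: "\<forall>v\<in>Sn n. is_schubert_class n v (\<sigma> v)"
begin

lemma sc_gkm: "v \<in> Sn n \<Longrightarrow> gkm n (\<sigma> v)"
  using schubert by (simp add: is_schubert_class_def)

lemma sc_supp: "v \<in> Sn n \<Longrightarrow> u \<in> Sn n \<Longrightarrow> \<sigma> v u \<noteq> 0 \<Longrightarrow> bruhat_le n v u"
  using schubert by (auto simp: is_schubert_class_def)

lemma sc_hom: "v \<in> Sn n \<Longrightarrow> u \<in> Sn n \<Longrightarrow> homogeneous (ell n v) (\<sigma> v u)"
  using schubert by (cases "\<sigma> v u = 0") (auto simp: is_schubert_class_def)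

lemma sc_diag: "v \<in> Sn n \<Longrightarrow> \<sigma> v v = Pr n v"
  using schubert by (simp add: is_schubert_class_def prod_Inv Pr_def)

definition up :: "((nat \<Rightarrow> nat) \<Rightarrow> mpoly) \<Rightarrow> (nat \<Rightarrow> nat) set" where
  "up f = {v\<in>Sn n. \<exists>x\<in>Sn n. f x \<noteq> 0 \<and> bruhat_le n x v}"

lemma expansion:
  assumes "gkm n f" "\<And>u. u \<in> Sn n \<Longrightarrow> homogeneous d (f u)"
  shows "\<exists>c. (\<forall>v\<in>Sn n. in_ring n (c v)) \<and>
    (\<forall>v\<in>Sn n. c v \<noteq> 0 \<longrightarrow> ell n v \<le> d \<and> homogeneous (d - ell n v) (c v) \<and>
        (\<exists>x\<in>Sn n. f x \<noteq> 0 \<and> bruhat_le n x v)) \<and>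
    (\<forall>u\<in>Sn n. f u = (\<Sum>v\<in>Sn n. c v * \<sigma> v u))"
  using assms
proof (induction "card (up f)" arbitrary: f rule: less_induct)
  case less
  note gf = less.prems(1) and hf = less.prems(2)
  show ?case
  proof (cases "\<exists>u\<in>Sn n. f u \<noteq> 0")
    case False
    then show ?thesis by (intro exI[of _ "\<lambda>_. 0"]) simp
  next
    case True
    then obtain u where u: "u \<in> Sn n" "f u \<noteq> 0"
      and umin: "\<And>y. y \<in> Sn n \<Longrightarrow> f y \<noteq> 0 \<Longrightarrow> ell n u \<le> ell n y"
      using ex_has_least_nat[of "\<lambda>x. x \<in> Sn n \<and> f x \<noteq> 0" _ "ell n"] by blast
    have van: "subst (sv a b) (f u) = 0" if ab: "(a, b) \<in> IPp n (inv u)" for a b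
    proof -
      have ab': "1 \<le> a" "a < b" "b \<le> n" using ab by (auto simp: IPp_def)
      have "f (transpose a b \<circ> u) = 0"
        using umin[OF desc_below(2)[OF u(1) ab]] desc_below(3)[OF u(1) ab] by fastforce
      moreover obtain q where "f u - f (transpose a b \<circ> u) = q * (var a - var b)"
        using gkm_D[OF gf u(1) ab'] by blast
      ultimately have "f u = q * (var a - var b)" by simp
      then show ?thesis by (simp add: subst_sv_factor)
    qed
    obtain c0 where c0: "in_ring n c0" "f u = c0 * Pr n u"
      using prod_roots_divides[OF finite_IPp IPp_sub gkm_ring[OF gf u(1)] van] unfolding Pr_def by blast
    have hprod: "homogeneous d (Pr n u * c0)" using hf[OF u(1)] c0(2) by (simp add: mult.commute)
    have c0hom: "homogeneous (d - ell n u) c0"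
      using hom_quotient_hom(1)[OF Pr_nonzero Pr_hom hprod] .
    have ellu: "ell n u \<le> d"
    proof (rule ccontr)
      assume "\<not> ?thesis"
      then have "c0 = 0" using hom_quotient_hom(2)[OF Pr_nonzero Pr_hom hprod] by simp
      then show False using c0(2) u(2) by simp
    qed
    define f' where "f' = (\<lambda>x. f x - c0 * \<sigma> u x)"
    have gf': "gkm n f'" unfolding f'_def by (rule gkm_diff[OF gf gkm_scale[OF sc_gkm[OF u(1)] c0(1)]])
    have hf': "homogeneous d (f' x)" if x: "x \<in> Sn n" for x
    proof -
      have "homogeneous (d - ell n u + ell n u) (c0 * \<sigma> u x)"
        by (rule hom_mult[OF c0hom sc_hom[OF u(1) x]])
      then have "homogeneous d (c0 * \<sigma> u x)" using ellu by simp
      then show ?thesis unfolding f'_def by (rule hom_diff[OF hf[OF x]])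
    qed
    have f'u: "f' u = 0" unfolding f'_def using c0(2) sc_diag[OF u(1)] by simp
    have f'supp: "f x \<noteq> 0 \<or> bruhat_le n u x" if "x \<in> Sn n" "f' x \<noteq> 0" for x
      using that sc_supp[OF u(1)] unfolding f'_def by fastforce
    have sub: "up f' \<subseteq> up f - {u}"
    proof
      fix v assume v: "v \<in> up f'"
      then obtain x where x: "x \<in> Sn n" "f' x \<noteq> 0" "bruhat_le n x v" and vS: "v \<in> Sn n"
        by (auto simp: up_def)
      have "v \<in> up f"
        using f'supp[OF x(1,2)]
      proof
        assume "f x \<noteq> 0" then show ?thesis using x vS by (auto simp: up_def)
      next
        assume "bruhat_le n u x"
        then have "bruhat_le n u v" using x(3) by (rule bruhat_le_trans)
        then show ?thesis using u vS by (auto simp: up_def)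
      qed
      moreover have "v \<noteq> u"
      proof
        assume vu: "v = u"
        have "x = u"
          using f'supp[OF x(1,2)]
        proof
          assume "f x \<noteq> 0"
          then have "ell n u \<le> ell n x" using umin x(1) by blast
          then show "x = u" using bruhat_le_eq_ell x(3) vu by blast
        next
          assume "bruhat_le n u x"
          then show "x = u" using bruhat_le_antisym x(3) vu by blast
        qed
        then show False using x(2) f'u by simp
      qed
      ultimately show "v \<in> up f - {u}" by simp
    qed
    have uup: "u \<in> up f" using u bruhat_le_refl[OF u(1)] by (auto simp: up_def)
    have fin: "finite (up f)" by (rule finite_subset[of _ "Sn n"]) (auto simp: up_def)
    have "card (up f') < card (up f)"
      by (rule psubset_card_mono[OF fin]) (use sub uup in blast)
    from less.hyps[OF this gf' hf'] obtain c' where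
      c'1: "\<forall>v\<in>Sn n. in_ring n (c' v)" and
      c'2: "\<forall>v\<in>Sn n. c' v \<noteq> 0 \<longrightarrow> ell n v \<le> d \<and> homogeneous (d - ell n v) (c' v) \<and>
        (\<exists>x\<in>Sn n. f' x \<noteq> 0 \<and> bruhat_le n x v)" and
      c'3: "\<forall>x\<in>Sn n. f' x = (\<Sum>v\<in>Sn n. c' v * \<sigma> v x)" by blast
    have c'u: "c' u = 0"
    proof (rule ccontr)
      assume "c' u \<noteq> 0"
      then obtain x where "x \<in> Sn n" "f' x \<noteq> 0" "bruhat_le n x u" using c'2 u(1) by blast
      then have "u \<in> up f'" using u(1) by (auto simp: up_def)
      then show False using sub by blast
    qed
    define c where "c = c'(u := c0)"
    show ?thesis
    proof (rule exI[of _ c], intro conjI)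
      show "\<forall>v\<in>Sn n. in_ring n (c v)" using c'1 c0(1) by (simp add: c_def)
    next
      show "\<forall>v\<in>Sn n. c v \<noteq> 0 \<longrightarrow> ell n v \<le> d \<and> homogeneous (d - ell n v) (c v) \<and>
        (\<exists>x\<in>Sn n. f x \<noteq> 0 \<and> bruhat_le n x v)"
      proof (intro ballI impI)
      fix v assume v: "v \<in> Sn n" and cv: "c v \<noteq> 0"
      show "ell n v \<le> d \<and> homogeneous (d - ell n v) (c v) \<and> (\<exists>x\<in>Sn n. f x \<noteq> 0 \<and> bruhat_le n x v)"
      proof (cases "v = u")
        case True
        then show ?thesis using ellu c0hom u bruhat_le_refl[OF u(1)] by (auto simp: c_def)
      next
        case False
        then have cv': "c' v \<noteq> 0" "c v = c' v" using cv by (auto simp: c_def)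
        then obtain x where x: "x \<in> Sn n" "f' x \<noteq> 0" "bruhat_le n x v"
          and rest: "ell n v \<le> d" "homogeneous (d - ell n v) (c' v)" using c'2 v by blast
        have "\<exists>x\<in>Sn n. f x \<noteq> 0 \<and> bruhat_le n x v"
          using f'supp[OF x(1,2)]
        proof
          assume "f x \<noteq> 0" then show ?thesis using x by blast
        next
          assume "bruhat_le n u x"
          then show ?thesis using u x(3) bruhat_le_trans by blast
        qed
        then show ?thesis using rest cv' by simp
      qed
      qed
    next
      show "\<forall>x\<in>Sn n. f x = (\<Sum>v\<in>Sn n. c v * \<sigma> v x)"
      proof
      fix x assume x: "x \<in> Sn n"
      have "(\<Sum>v\<in>Sn n. c v * \<sigma> v x) = c u * \<sigma> u x + (\<Sum>v\<in>Sn n - {u}. c v * \<sigma> v x)"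
        by (rule sum.remove[OF finite_Sn u(1)])
      also have "(\<Sum>v\<in>Sn n - {u}. c v * \<sigma> v x) = (\<Sum>v\<in>Sn n - {u}. c' v * \<sigma> v x)"
        by (rule sum.cong) (auto simp: c_def)
      also have "\<dots> = c' u * \<sigma> u x + (\<Sum>v\<in>Sn n - {u}. c' v * \<sigma> v x)" by (simp add: c'u)
      also have "\<dots> = (\<Sum>v\<in>Sn n. c' v * \<sigma> v x)"
        by (rule sum.remove[OF finite_Sn u(1), symmetric])
      also have "\<dots> = f' x" using c'3 x by simp
      finally show "f x = (\<Sum>v\<in>Sn n. c v * \<sigma> v x)"
        unfolding f'_def by (simp add: c_def)
      qed
    qed
  qed
qed

lemma simple_formula:
  assumes w: "w \<in> Sn n" and i: "1 \<le> i" "Suc i \<le> n"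
  shows "\<exists>e. (\<forall>v\<in>Sn n. in_ring n (e v)) \<and>
    (\<forall>v\<in>Sn n. e v \<noteq> 0 \<longrightarrow> bruhat_le n v w \<and> homogeneous (ell n w - ell n v) (e v)) \<and>
    e w = 1 \<and>
    (\<forall>u\<in>Sn n. weyl_act (transpose i (Suc i)) (\<sigma> w) u = (\<Sum>v\<in>Sn n. e v * \<sigma> v u))"
proof -
  define r where "r = transpose i (Suc i)"
  define \<alpha> where "\<alpha> = var i - var (Suc i)"
  have rS: "r \<in> Sn n" unfolding r_def using i by (intro Sn_transpose) auto
  have inv_r: "inv r = r" by (simp add: r_def)
  have rr: "r \<circ> (r \<circ> u) = u" for u by (simp add: r_def transpose_comp_cancel)
  have \<alpha>0: "\<alpha> \<noteq> 0" by (simp add: \<alpha>_def var_inj)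
  have \<alpha>hom: "homogeneous 1 \<alpha>" by (simp add: \<alpha>_def hom_diff)
  have \<alpha>ring: "in_ring n \<alpha>" unfolding \<alpha>_def using i by (intro in_ring_diff in_ring_var) auto
  have r\<alpha>: "poly_act r \<alpha> = - \<alpha>" by (simp add: r_def \<alpha>_def poly_act_root)
  have gw: "gkm n (\<sigma> w)" by (rule sc_gkm[OF w])
  define g where "g = (\<lambda>u. \<sigma> w u - weyl_act r (\<sigma> w) u)"
  have gg: "gkm n g" unfolding g_def by (rule gkm_diff[OF gw gkm_weyl[OF rS gw]])
  have g_eq: "g u = \<sigma> w u - poly_act r (\<sigma> w (r \<circ> u))" for u
    by (simp add: g_def weyl_act_def inv_r)
  have rsub: "subst (sv i (Suc i)) (poly_act r f) = subst (sv i (Suc i)) f" for f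
    unfolding r_def by (rule subst_sv_poly_act)
  have gdiv: "\<exists>h. in_ring n h \<and> g u = h * \<alpha>" if u: "u \<in> Sn n" for u
  proof -
    obtain q where q: "in_ring n q" "\<sigma> w u - \<sigma> w (r \<circ> u) = q * \<alpha>"
      using gkm_D[OF gw u i(1), of "Suc i"] i by (auto simp: r_def \<alpha>_def)
    have "g u = (\<sigma> w u - \<sigma> w (r \<circ> u)) + (\<sigma> w (r \<circ> u) - poly_act r (\<sigma> w (r \<circ> u)))"
      by (simp add: g_eq)
    then have "subst (sv i (Suc i)) (g u) = 0"
      by (simp add: q(2) subst_add subst_diff rsub \<alpha>_def subst_sv_factor)
    then show ?thesis
      using factor_thm[OF gkm_ring[OF gg u], of "Suc i" i] i unfolding \<alpha>_def by auto
  qed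
  then obtain h where h: "\<And>u. u \<in> Sn n \<Longrightarrow> in_ring n (h u) \<and> g u = h u * \<alpha>"
    by metis
  have g_hom: "homogeneous (ell n w) (g u)" if u: "u \<in> Sn n" for u
  proof -
    have ru: "r \<circ> u \<in> Sn n" using rS u by (rule Sn_comp)
    show ?thesis unfolding g_eq
      by (rule hom_diff[OF sc_hom[OF w u] poly_act_hom[OF sc_hom[OF w ru]]])
  qed
  have h_hom: "homogeneous (ell n w - 1) (h u)" "ell n w < 1 \<Longrightarrow> h u = 0" if u: "u \<in> Sn n" for u
  proof -
    have "homogeneous (ell n w) (\<alpha> * h u)" using g_hom[OF u] h[OF u] by (simp add: mult.commute)
    then show "homogeneous (ell n w - 1) (h u)" "ell n w < 1 \<Longrightarrow> h u = 0"
      using hom_quotient_hom[OF \<alpha>0 \<alpha>hom] by auto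
  qed
  have hg: "gkm n h"
  proof (rule gkmI)
    fix u assume "u \<in> Sn n" then show "in_ring n (h u)" using h by blast
  next
    fix u j k assume u: "u \<in> Sn n" and jk: "1 \<le> j" "j < k" "k \<le> n"
    have tu: "transpose j k \<circ> u \<in> Sn n" using Sn_transpose_comp[OF u] jk by auto
    have X: "in_ring n (h u - h (transpose j k \<circ> u))"
      using h[OF u] h[OF tu] by (blast intro: in_ring_diff)
    have aX: "\<alpha> * (h u - h (transpose j k \<circ> u)) = g u - g (transpose j k \<circ> u)"
      using h[OF u] h[OF tu] by (simp add: algebra_simps)
    show "\<exists>q. in_ring n q \<and> h u - h (transpose j k \<circ> u) = q * (var j - var k)"
    proof (cases "j = i \<and> k = Suc i")
      case True
      then have tr: "transpose j k = r" by (simp add: r_def)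
      obtain q where q: "in_ring n q" "\<sigma> w u - \<sigma> w (r \<circ> u) = q * \<alpha>"
        using gkm_D[OF gw u i(1), of "Suc i"] i by (auto simp: r_def \<alpha>_def)
      have "g u - g (r \<circ> u) = (\<sigma> w u - \<sigma> w (r \<circ> u)) + poly_act r (\<sigma> w u - \<sigma> w (r \<circ> u))"
        by (simp add: g_eq rr poly_act_diff)
      also have "\<dots> = \<alpha> * (q - poly_act r q)"
        by (simp add: q(2) poly_act_mult r\<alpha> algebra_simps)
      finally have "\<alpha> * (h u - h (r \<circ> u)) = \<alpha> * (q - poly_act r q)" using aX tr by simp
      then have eq: "h u - h (r \<circ> u) = q - poly_act r q" using \<alpha>0 by simp
      have "subst (sv i (Suc i)) (q - poly_act r q) = 0" by (simp add: subst_diff rsub)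
      then obtain q' where "in_ring n q'" "q - poly_act r q = q' * (var i - var (Suc i))"
        using factor_thm[OF in_ring_diff[OF q(1) poly_act_in_ring[OF rS q(1)]], of "Suc i" i] i by auto
      then show ?thesis using eq tr True by auto
    next
      case False
      obtain qg where qg: "g u - g (transpose j k \<circ> u) = qg * (var j - var k)"
        using gkm_D[OF gg u jk] by blast
      have ne: "subst (sv j k) \<alpha> \<noteq> 0"
        unfolding \<alpha>_def by (rule sv_root_nonzero) (use jk False in auto)
      have "subst (sv j k) (\<alpha> * (h u - h (transpose j k \<circ> u))) = 0"
        unfolding aX qg by (rule subst_sv_factor)
      then have "subst (sv j k) (h u - h (transpose j k \<circ> u)) = 0" by (rule sv_cancel[OF ne])
      then show ?thesis using factor_thm[OF X, of k j] jk by auto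
    qed
  qed
  obtain kk where k1: "\<forall>v\<in>Sn n. in_ring n (kk v)"
    and k2: "\<forall>v\<in>Sn n. kk v \<noteq> 0 \<longrightarrow> ell n v \<le> ell n w - 1 \<and> homogeneous (ell n w - 1 - ell n v) (kk v) \<and>
        (\<exists>x\<in>Sn n. h x \<noteq> 0 \<and> bruhat_le n x v)"
    and k3: "\<forall>u\<in>Sn n. h u = (\<Sum>v\<in>Sn n. kk v * \<sigma> v u)"
    using expansion[OF hg h_hom(1)] by blast
  have rw: "r \<circ> w \<in> Sn n" using rS w by (rule Sn_comp)
  have ksupp: "v = r \<circ> w \<and> ell n v + 1 = ell n w" if v: "v \<in> Sn n" "kk v \<noteq> 0" for v
  proof -
    obtain x where x: "x \<in> Sn n" "h x \<noteq> 0" "bruhat_le n x v" and lv: "ell n v \<le> ell n w - 1"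
      using k2 v by blast
    have lw: "1 \<le> ell n w" using h_hom(2)[OF x(1)] x(2) by linarith
    have lx: "ell n x \<le> ell n v" using bruhat_le_ell[OF x(3)] .
    have "g x \<noteq> 0" using h[OF x(1)] x(2) \<alpha>0 by auto
    then have "\<sigma> w x \<noteq> 0 \<or> \<sigma> w (r \<circ> x) \<noteq> 0" by (auto simp: g_eq)
    moreover have "\<not> \<sigma> w x \<noteq> 0"
    proof
      assume "\<sigma> w x \<noteq> 0"
      then have "ell n w \<le> ell n x" using bruhat_le_ell[OF sc_supp[OF w x(1)]] by blast
      then show False using lx lv lw by linarith
    qed
    ultimately have "\<sigma> w (r \<circ> x) \<noteq> 0" by blast
    have rx: "r \<circ> x \<in> Sn n" using rS x(1) by (rule Sn_comp)
    have wle: "bruhat_le n w (r \<circ> x)" by (rule sc_supp[OF w rx \<open>\<sigma> w (r \<circ> x) \<noteq> 0\<close>])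
    have adj: "ell n (r \<circ> x) \<le> ell n x + 1" unfolding r_def by (rule ell_adj[OF x(1) i])
    have "ell n w \<le> ell n (r \<circ> x)" by (rule bruhat_le_ell[OF wle])
    then have exv: "ell n x = ell n v" "ell n v + 1 = ell n w" using adj lx lv lw by linarith+
    have xv: "x = v" using bruhat_le_eq_ell[OF x(3)] exv by simp
    have "w = r \<circ> x" using bruhat_le_eq_ell[OF wle] adj exv by simp
    then have "r \<circ> w = v" using xv rr[of x] by simp
    then have "v = r \<circ> w" by simp
    then show ?thesis using exv by simp
  qed
  have rw_ne: "r \<circ> w \<noteq> w"
  proof
    assume "r \<circ> w = w"
    then have "r (w (inv w i)) = w (inv w i)" by (metis comp_apply)
    moreover have "w (inv w i) = i" using w by (simp add: Sn_def permutes_inverses)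
    ultimately show False by (simp add: r_def)
  qed
  have kw: "kk w = 0" using ksupp[OF w] rw_ne by auto
  define e where "e = (\<lambda>v. (if v = w then 1 else 0) - \<alpha> * kk v)"
  show ?thesis
  proof (rule exI[of _ e], intro conjI)
    show "\<forall>v\<in>Sn n. in_ring n (e v)"
      using k1 \<alpha>ring by (auto simp: e_def intro!: in_ring_diff in_ring_mult in_ring_uminus)
  next
    show "\<forall>v\<in>Sn n. e v \<noteq> 0 \<longrightarrow> bruhat_le n v w \<and> homogeneous (ell n w - ell n v) (e v)"
    proof (intro ballI impI)
      fix v assume v: "v \<in> Sn n" and ev: "e v \<noteq> 0"
      show "bruhat_le n v w \<and> homogeneous (ell n w - ell n v) (e v)"
      proof (cases "v = w")
        case True
        then show ?thesis using w kw bruhat_le_refl[OF w] by (simp add: e_def)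
      next
        case False
        then have kv: "kk v \<noteq> 0" using ev by (auto simp: e_def)
        from ksupp[OF v kv] have vr: "v = r \<circ> w" and lv: "ell n v + 1 = ell n w" by auto
        have B: "bruhat_le n v w"
          by (rule bruhat_le_stepI[OF v i(1), of "Suc i"]) (use i vr rr lv in \<open>auto simp: r_def\<close>)
        have "homogeneous 0 (kk v)" using k2 v kv lv by auto
        then have "homogeneous (1 + 0) (\<alpha> * kk v)" by (rule hom_mult[OF \<alpha>hom])
        then have H1: "homogeneous 1 (- (\<alpha> * kk v))" using hom_uminus by simp
        have "ell n w - ell n v = 1" using lv by simp
        then have "homogeneous (ell n w - ell n v) (- (\<alpha> * kk v))" using H1 by simp
        then have "homogeneous (ell n w - ell n v) (e v)"
          using False by (simp add: e_def)
        then show ?thesis using B by simp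
      qed
    qed
  next
    show "e w = 1" by (simp add: e_def kw)
  next
    show "\<forall>u\<in>Sn n. weyl_act (transpose i (Suc i)) (\<sigma> w) u = (\<Sum>v\<in>Sn n. e v * \<sigma> v u)"
    proof
      fix u assume u: "u \<in> Sn n"
      have "(\<Sum>v\<in>Sn n. e v * \<sigma> v u) = (\<Sum>v\<in>Sn n. (if v = w then \<sigma> v u else 0) - \<alpha> * (kk v * \<sigma> v u))"
        by (rule sum.cong) (auto simp: e_def left_diff_distrib mult.assoc)
      also have "\<dots> = (\<Sum>v\<in>Sn n. (if v = w then \<sigma> v u else 0)) - \<alpha> * (\<Sum>v\<in>Sn n. kk v * \<sigma> v u)"
        by (simp add: sum_subtractf sum_distrib_left)
      also have "\<dots> = \<sigma> w u - \<alpha> * h u" using w k3 u by simp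
      also have "\<dots> = \<sigma> w u - g u" using h[OF u] by (simp add: mult.commute)
      also have "\<dots> = weyl_act r (\<sigma> w) u" by (simp add: g_def)
      finally show "weyl_act (transpose i (Suc i)) (\<sigma> w) u = (\<Sum>v\<in>Sn n. e v * \<sigma> v u)"
        by (simp add: r_def)
    qed
  qed
qed

lemma SP_Sn: "SP n p \<Longrightarrow> p \<in> Sn n"
proof (induction rule: SP.induct)
  case SP_id
  show ?case unfolding Sn_def using permutes_id[of "{1..n}"] by (simp add: id_def)
next
  case (SP_step p i)
  show ?case by (rule Sn_transpose_comp[OF SP_step.IH]) (use SP_step.hyps in auto)
qed

definition expands :: "(nat \<Rightarrow> nat) \<Rightarrow> (nat \<Rightarrow> nat) \<Rightarrow> ((nat \<Rightarrow> nat) \<Rightarrow> mpoly) \<Rightarrow> bool" where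
  "expands s w c \<longleftrightarrow> (\<forall>v\<in>Sn n. in_ring n (c v)) \<and>
    (\<forall>v\<in>Sn n. c v \<noteq> 0 \<longrightarrow> bruhat_le n v w \<and> homogeneous (ell n w - ell n v) (c v)) \<and>
    c w = 1 \<and>
    (\<forall>u\<in>Sn n. weyl_act s (\<sigma> w) u = (\<Sum>v\<in>Sn n. c v * \<sigma> v u))"

lemma expands_simple:
  assumes "w \<in> Sn n" "1 \<le> i" "Suc i \<le> n"
  shows "\<exists>e. expands (transpose i (Suc i)) w e"
  unfolding expands_def using simple_formula[OF assms] .

lemma weyl_act_id: "weyl_act id p u = p u"
  by (simp add: weyl_act_def poly_act_id)

lemma expands_all: "SP n s \<Longrightarrow> w \<in> Sn n \<Longrightarrow> \<exists>c. expands s w c"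
proof (induction arbitrary: w rule: SP.induct)
  case SP_id
  show ?case
  proof (rule exI[of _ "\<lambda>v. if v = w then 1 else 0"])
    show "expands id w (\<lambda>v. if v = w then 1 else 0)"
      unfolding expands_def
    proof (intro conjI ballI impI)
      fix u assume u: "u \<in> Sn n"
      have "(\<Sum>v\<in>Sn n. (if v = w then 1 else 0) * \<sigma> v u) = (\<Sum>v\<in>Sn n. if v = w then \<sigma> v u else 0)"
        by (rule sum.cong) auto
      then show "weyl_act id (\<sigma> w) u = (\<Sum>v\<in>Sn n. (if v = w then 1 else 0) * \<sigma> v u)"
        using SP_id by (simp add: weyl_act_id)
    qed (use SP_id bruhat_le_refl[OF SP_id] in \<open>auto split: if_splits\<close>)
  qed
next
  case (SP_step p i)
  define r where "r = transpose i (Suc i)"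
  have rS: "r \<in> Sn n" unfolding r_def using SP_step.hyps by (intro Sn_transpose) auto
  have pS: "p \<in> Sn n" by (rule SP_Sn[OF SP_step.hyps(1)])
  obtain c where c: "expands p w c" using SP_step.IH[OF SP_step.prems] by blast
  have "\<forall>v\<in>Sn n. \<exists>e. expands r v e"
    unfolding r_def using expands_simple SP_step.hyps by blast
  then obtain E where E: "\<And>v. v \<in> Sn n \<Longrightarrow> expands r v (E v)" by metis
  define C where "C = (\<lambda>y. \<Sum>v\<in>Sn n. poly_act r (c v) * E v y)"
  have c1: "in_ring n (c v)" "c v \<noteq> 0 \<Longrightarrow> bruhat_le n v w \<and> homogeneous (ell n w - ell n v) (c v)"
    if "v \<in> Sn n" for v using c that unfolding expands_def by auto
  have c3: "c w = 1" and c4: "\<And>u. u \<in> Sn n \<Longrightarrow> weyl_act p (\<sigma> w) u = (\<Sum>v\<in>Sn n. c v * \<sigma> v u)"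
    using c unfolding expands_def by auto
  have E1: "in_ring n (E v y)" "E v y \<noteq> 0 \<Longrightarrow> bruhat_le n y v \<and> homogeneous (ell n v - ell n y) (E v y)"
    if "v \<in> Sn n" "y \<in> Sn n" for v y using E[OF that(1)] that(2) unfolding expands_def by auto
  have E3: "E v v = 1" and E4: "\<And>u. u \<in> Sn n \<Longrightarrow> weyl_act r (\<sigma> v) u = (\<Sum>y\<in>Sn n. E v y * \<sigma> y u)"
    if "v \<in> Sn n" for v using E[OF that] unfolding expands_def by auto
  have term_nz: "c v \<noteq> 0 \<and> E v y \<noteq> 0" if "poly_act r (c v) * E v y \<noteq> 0" for v y
    using that by auto
  show ?case
  proof (rule exI[of _ C])
    show "expands (transpose i (Suc i) \<circ> p) w C"
      unfolding expands_def
    proof (intro conjI)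
      show "\<forall>v\<in>Sn n. in_ring n (C v)"
        unfolding C_def using c1(1) E1(1) rS
        by (auto intro!: in_ring_sum in_ring_mult poly_act_in_ring)
    next
      show "\<forall>y\<in>Sn n. C y \<noteq> 0 \<longrightarrow> bruhat_le n y w \<and> homogeneous (ell n w - ell n y) (C y)"
      proof (intro ballI impI conjI)
        fix y assume y: "y \<in> Sn n" and Cy: "C y \<noteq> 0"
        then obtain v where v: "v \<in> Sn n" "poly_act r (c v) * E v y \<noteq> 0"
          unfolding C_def by (meson sum.neutral)
        then have "c v \<noteq> 0" "E v y \<noteq> 0" by auto
        then show "bruhat_le n y w" using c1(2)[OF v(1)] E1(2)[OF v(1) y] bruhat_le_trans by blast
      next
        fix y assume y: "y \<in> Sn n"
        show "homogeneous (ell n w - ell n y) (C y)"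
          unfolding C_def
        proof (rule hom_sum)
          fix v assume v: "v \<in> Sn n"
          show "homogeneous (ell n w - ell n y) (poly_act r (c v) * E v y)"
          proof (cases "c v \<noteq> 0 \<and> E v y \<noteq> 0")
            case True
            then have A: "bruhat_le n v w" "homogeneous (ell n w - ell n v) (c v)"
              and B: "bruhat_le n y v" "homogeneous (ell n v - ell n y) (E v y)"
              using c1(2)[OF v] E1(2)[OF v y] by auto
            have "homogeneous (ell n w - ell n v + (ell n v - ell n y)) (poly_act r (c v) * E v y)"
              by (rule hom_mult[OF poly_act_hom[OF A(2)] B(2)])
            moreover have "ell n w - ell n v + (ell n v - ell n y) = ell n w - ell n y"
              using bruhat_le_ell[OF A(1)] bruhat_le_ell[OF B(1)] by linarith
            ultimately show ?thesis by simp
          next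
            case False
            then have z: "poly_act r (c v) * E v y = 0" by (metis mult_eq_0_iff poly_act_zero)
            show ?thesis unfolding z by (rule hom_0)
          qed
        qed
      qed
    next
      have "C w = (\<Sum>v\<in>Sn n. if v = w then 1 else 0)"
        unfolding C_def
      proof (rule sum.cong)
        fix v assume v: "v \<in> Sn n"
        show "poly_act r (c v) * E v w = (if v = w then 1 else 0)"
        proof (cases "v = w")
          case True
          then show ?thesis using c3 E3[OF v] by simp
        next
          case False
          have "\<not> (c v \<noteq> 0 \<and> E v w \<noteq> 0)"
          proof
            assume "c v \<noteq> 0 \<and> E v w \<noteq> 0"
            then have "bruhat_le n v w" "bruhat_le n w v"
              using c1(2)[OF v] E1(2)[OF v SP_step.prems] by auto
            then show False using False bruhat_le_antisym by blast
          qed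
          then show ?thesis using False by auto
        qed
      qed simp
      then show "C w = 1" using SP_step.prems by simp
    next
      show "\<forall>u\<in>Sn n. weyl_act (transpose i (Suc i) \<circ> p) (\<sigma> w) u = (\<Sum>y\<in>Sn n. C y * \<sigma> y u)"
      proof
        fix u assume u: "u \<in> Sn n"
        have ru: "r \<circ> u \<in> Sn n" using rS u by (rule Sn_comp)
        have "weyl_act (r \<circ> p) (\<sigma> w) u = weyl_act r (weyl_act p (\<sigma> w)) u"
          by (rule weyl_act_comp[OF rS pS, symmetric])
        also have "\<dots> = poly_act r (weyl_act p (\<sigma> w) (r \<circ> u))"
          by (simp add: weyl_act_def r_def)
        also have "\<dots> = poly_act r (\<Sum>v\<in>Sn n. c v * \<sigma> v (r \<circ> u))"
          using c4[OF ru] by simp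
        also have "\<dots> = (\<Sum>v\<in>Sn n. poly_act r (c v) * weyl_act r (\<sigma> v) u)"
          by (simp add: poly_act_sum poly_act_mult weyl_act_def r_def)
        also have "\<dots> = (\<Sum>v\<in>Sn n. \<Sum>y\<in>Sn n. poly_act r (c v) * (E v y * \<sigma> y u))"
          by (rule sum.cong) (simp_all add: E4 u sum_distrib_left)
        also have "\<dots> = (\<Sum>y\<in>Sn n. \<Sum>v\<in>Sn n. poly_act r (c v) * (E v y * \<sigma> y u))"
          by (rule sum.swap)
        also have "\<dots> = (\<Sum>y\<in>Sn n. C y * \<sigma> y u)"
          by (simp add: C_def sum_distrib_right mult.assoc)
        finally show "weyl_act (transpose i (Suc i) \<circ> p) (\<sigma> w) u = (\<Sum>y\<in>Sn n. C y * \<sigma> y u)"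
          by (simp add: r_def)
      qed
    qed
  qed
qed

end

theorem mainTheorem6:
  fixes n :: nat
    and \<sigma> :: "(nat \<Rightarrow> nat) \<Rightarrow> (nat \<Rightarrow> nat) \<Rightarrow> mpoly"
    and s w :: "nat \<Rightarrow> nat"
  assumes schubert: "\<forall>v\<in>Sn n. is_schubert_class n v (\<sigma> v)"
    and s: "s \<in> Sn n"
    and w: "w \<in> Sn n"
  shows "\<exists>c :: (nat \<Rightarrow> nat) \<Rightarrow> mpoly.
           (\<forall>v\<in>Sn n. bruhat_less n v w \<longrightarrow> in_ring n (c v)) \<and>
           (\<forall>v\<in>Sn n. bruhat_less n v w \<longrightarrow> c v \<noteq> 0 \<longrightarrow>
               total_degree (c v) = ell n w - ell n v) \<and>
           (\<forall>u\<in>Sn n. weyl_act s (\<sigma> w) u =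
               \<sigma> w u + (\<Sum>v\<in>{v\<in>Sn n. bruhat_less n v w}. c v * \<sigma> v u))"
proof -
  obtain c where c: "expands n \<sigma> s w c"
    using expands_all[OF schubert Sn_SP[OF s] w] by blast
  have c1: "in_ring n (c v)" "c v \<noteq> 0 \<Longrightarrow> bruhat_le n v w \<and> homogeneous (ell n w - ell n v) (c v)"
    if "v \<in> Sn n" for v using c that unfolding expands_def[OF schubert] by auto
  have c3: "c w = 1" and c4: "\<And>u. u \<in> Sn n \<Longrightarrow> weyl_act s (\<sigma> w) u = (\<Sum>v\<in>Sn n. c v * \<sigma> v u)"
    using c unfolding expands_def[OF schubert] by auto
  show ?thesis
  proof (intro exI[of _ c] conjI ballI impI)
    fix v assume "v \<in> Sn n" then show "in_ring n (c v)" by (rule c1(1))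
  next
    fix v assume v: "v \<in> Sn n" and "bruhat_less n v w" and cv: "c v \<noteq> 0"
    then show "total_degree (c v) = ell n w - ell n v"
      using c1(2)[OF v cv] total_degree_hom by blast
  next
    fix u assume u: "u \<in> Sn n"
    have "(\<Sum>v\<in>Sn n. c v * \<sigma> v u) = c w * \<sigma> w u + (\<Sum>v\<in>Sn n - {w}. c v * \<sigma> v u)"
      by (rule sum.remove[OF finite_Sn w])
    also have "(\<Sum>v\<in>Sn n - {w}. c v * \<sigma> v u) = (\<Sum>v\<in>{v\<in>Sn n. bruhat_less n v w}. c v * \<sigma> v u)"
    proof (rule sum.mono_neutral_right)
      show "finite (Sn n - {w})" by simp
      show "{v \<in> Sn n. bruhat_less n v w} \<subseteq> Sn n - {w}" by (auto simp: bruhat_less_def)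
      show "\<forall>v\<in>Sn n - {w} - {v \<in> Sn n. bruhat_less n v w}. c v * \<sigma> v u = 0"
        using c1(2) by (auto simp: bruhat_less_def)
    qed
    finally show "weyl_act s (\<sigma> w) u = \<sigma> w u + (\<Sum>v\<in>{v\<in>Sn n. bruhat_less n v w}. c v * \<sigma> v u)"
      using c4[OF u] c3 by simp
  qed
qed

end
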